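(* Let $Q\subset\mathbb R^n$ be a cube and let $0<p_0<\infty$. Then $$\bigcup_{r>0}\mathcal M^r_{A_1}(Q)=\bigcup_{p>0}L^p(Q)=\bigcup_{w\in A_\infty(Q)}L^{p_0}_w(Q).$$
   Context: Cubes have sides parallel to the coordinate axes. A weight on $Q$ is a function in $L^1(Q)$ that is positive a.e. For a cube $Q$, $M_Q f(x)=\sup\{|Q'|^{-1}\int_{Q'}|f|\,dy: Q'\subset Q \text{ a cube},\ x\in Q'\}$. $A_1(Q)$ is the class of weights $w$ on $Q$ with $M_Qw\le Cw$ a.e. on $Q$ for some constant $C$. For $1<q<\infty$, $A_q(Q)$ is the class of weights $w$ on $Q$ with $\sup_{Q'\subset Q}\big(\frac{1}{|Q'|}\int_{Q'}w\big)\big(\frac{1}{|Q'|}\int_{Q'}w^{1-q'}\big)<\infty$, the supremum over cubes $Q'\subset Q$, where $1/q+1/q'=1$; $A_\infty(Q)=\bigcup_{q\ge1}A_q(Q)$. $L^{p}_w(Q)$ is the set of measurable $f$ on $Q$ with $\int_Q|f|^{p}w\,dx<\infty$. For $0<r<\infty$, $\mathcal M^r_{A_1}(Q)$ is the set of measurable functions $f$ on $Q$ for which there exists $w\in A_1(Q)$ with $|f|^r\le w$ a.e. on $Q$. *)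

theory Defs
  imports "HOL-Analysis.Analysis"
begin

definition is_cube :: "(real^'n) set \<Rightarrow> bool" where
  "is_cube Q \<longleftrightarrow> (\<exists>a l. l > 0 \<and> Q = cbox a (a + l *\<^sub>R One))"

definition avg :: "(real^'n) set \<Rightarrow> (real^'n \<Rightarrow> real) \<Rightarrow> ennreal" where
  "avg Q' f = (\<integral>\<^sup>+x\<in>Q'. ennreal \<bar>f x\<bar> \<partial>lebesgue) / emeasure lebesgue Q'"

definition maxQ :: "(real^'n) set \<Rightarrow> (real^'n \<Rightarrow> real) \<Rightarrow> real^'n \<Rightarrow> ennreal" where
  "maxQ Q f x = (SUP Q'\<in>{Q'. is_cube Q' \<and> Q' \<subseteq> Q \<and> x \<in> Q'}. avg Q' f)"

definition weight :: "(real^'n) set \<Rightarrow> (real^'n \<Rightarrow> real) \<Rightarrow> bool" where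
  "weight Q w \<longleftrightarrow> integrable (lebesgue_on Q) w \<and> (AE x in lebesgue_on Q. w x > 0)"

definition A1 :: "(real^'n) set \<Rightarrow> (real^'n \<Rightarrow> real) \<Rightarrow> bool" where
  "A1 Q w \<longleftrightarrow> weight Q w \<and>
     (\<exists>C::real. AE x in lebesgue_on Q. maxQ Q w x \<le> ennreal (C * w x))"

text \<open>A_q for 1 < q < infinity; q' is the conjugate exponent, 1 - q' = -1/(q-1).\<close>
definition Aq :: "(real^'n) set \<Rightarrow> real \<Rightarrow> (real^'n \<Rightarrow> real) \<Rightarrow> bool" where
  "Aq Q q w \<longleftrightarrow> weight Q w \<and>
     (let q' = q / (q - 1) in
      (SUP Q'\<in>{Q'. is_cube Q' \<and> Q' \<subseteq> Q}.
          avg Q' w * avg Q' (\<lambda>x. w x powr (1 - q'))) < \<infinity>)"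

definition Ainf :: "(real^'n) set \<Rightarrow> (real^'n \<Rightarrow> real) \<Rightarrow> bool" where
  "Ainf Q w \<longleftrightarrow> A1 Q w \<or> (\<exists>q>1. Aq Q q w)"

definition Lpw :: "real \<Rightarrow> (real^'n \<Rightarrow> real) \<Rightarrow> (real^'n) set \<Rightarrow> (real^'n \<Rightarrow> real) set" where
  "Lpw p w Q = {f. f \<in> borel_measurable (lebesgue_on Q) \<and>
      (\<integral>\<^sup>+x\<in>Q. ennreal (\<bar>f x\<bar> powr p * w x) \<partial>lebesgue) < \<infinity>}"

definition Lp :: "real \<Rightarrow> (real^'n) set \<Rightarrow> (real^'n \<Rightarrow> real) set" where
  "Lp p Q = Lpw p (\<lambda>_. 1) Q"

definition MA1 :: "real \<Rightarrow> (real^'n) set \<Rightarrow> (real^'n \<Rightarrow> real) set" where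
  "MA1 r Q = {f. f \<in> borel_measurable (lebesgue_on Q) \<and>
      (\<exists>w. A1 Q w \<and> (AE x in lebesgue_on Q. \<bar>f x\<bar> powr r \<le> w x))}"

end

theory Submission
  imports Defs
begin

lemma One_nth[simp]: "(One::real^'n) $ i = 1"
  by (metis one_index Cart_1)

lemma sum_Basis_nth[simp]: "(\<Sum>x\<in>(Basis::(real^'n) set). x $ i) = 1"
  using One_nth[of i] by (simp add: sum_component)

declare emeasure_completion[simp del]

lemma mem_cube: "(x::real^'n) \<in> cbox b (b + l *\<^sub>R One) \<longleftrightarrow> (\<forall>i. b$i \<le> x$i \<and> x$i \<le> b$i + l)"
  unfolding mem_box_cart vector_add_component vector_scaleR_component One_nth by simp

lemma cube_emeasure:
  fixes a :: "real^'n"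
  assumes "l > 0"
  shows "emeasure lebesgue (cbox a (a + l *\<^sub>R One)) = ennreal (l ^ CARD('n))"
proof -
  have "emeasure lebesgue (cbox a (a + l *\<^sub>R One)) = emeasure lborel (cbox a (a + l *\<^sub>R One))"
    by (simp add: emeasure_completion)
  also have "\<dots> = ennreal (prod ((\<bullet>) (l *\<^sub>R (One::real^'n))) Basis)"
    using assms by (subst emeasure_lborel_cbox) (auto simp: inner_simps)
  also have "prod ((\<bullet>) (l *\<^sub>R (One::real^'n))) (Basis::(real^'n) set) = l ^ CARD('n)"
    by (simp add: inner_simps prod_constant)
  finally show ?thesis .
qed

definition Me :: "(real^'n) set \<Rightarrow> (real^'n \<Rightarrow> ennreal) \<Rightarrow> real^'n \<Rightarrow> ennreal" where
  "Me Q g x = (SUP Q'\<in>{Q'. is_cube Q' \<and> Q' \<subseteq> Q \<and> x \<in> Q'}.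
      (\<integral>\<^sup>+y\<in>Q'. g y \<partial>lebesgue) / emeasure lebesgue Q')"

lemma maxQ_Me: "maxQ Q f x = Me Q (\<lambda>y. ennreal \<bar>f y\<bar>) x"
  by (simp add: maxQ_def Me_def avg_def)

lemma Me_upper:
  "is_cube Q' \<Longrightarrow> Q' \<subseteq> Q \<Longrightarrow> x \<in> Q' \<Longrightarrow>
    (\<integral>\<^sup>+y\<in>Q'. g y \<partial>lebesgue) / emeasure lebesgue Q' \<le> Me Q g x"
  unfolding Me_def by (rule SUP_upper) auto

lemma Me_least:
  "(\<And>Q'. is_cube Q' \<Longrightarrow> Q' \<subseteq> Q \<Longrightarrow> x \<in> Q' \<Longrightarrow>
    (\<integral>\<^sup>+y\<in>Q'. g y \<partial>lebesgue) / emeasure lebesgue Q' \<le> c) \<Longrightarrow> Me Q g x \<le> c"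
  unfolding Me_def by (rule SUP_least) auto

lemma Me_outside: "x \<notin> Q \<Longrightarrow> Me Q g x = 0"
  unfolding Me_def by (rule antisym, rule SUP_least) auto

lemma cube_sets: "is_cube Q' \<Longrightarrow> Q' \<in> sets lebesgue"
  unfolding is_cube_def by auto

lemma cube_meas_pos: "is_cube Q' \<Longrightarrow> emeasure lebesgue Q' \<noteq> 0 \<and> emeasure lebesgue Q' \<noteq> top"
  unfolding is_cube_def by (auto simp: cube_emeasure)

lemma Me_mono:
  assumes "\<And>y. y \<in> Q \<Longrightarrow> g y \<le> g' y"
  shows "Me Q g x \<le> Me Q g' x"
  unfolding Me_def
proof (rule SUP_mono, intro bexI[of _ ] )
  fix Q' assume "Q' \<in> {Q'. is_cube Q' \<and> Q' \<subseteq> Q \<and> x \<in> Q'}"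
  then show "Q' \<in> {Q'. is_cube Q' \<and> Q' \<subseteq> Q \<and> x \<in> Q'}" and
    "(\<integral>\<^sup>+y\<in>Q'. g y \<partial>lebesgue) / emeasure lebesgue Q' \<le> (\<integral>\<^sup>+y\<in>Q'. g' y \<partial>lebesgue) / emeasure lebesgue Q'"
    using assms by (auto intro!: divide_right_mono_ennreal nn_integral_mono split: split_indicator)
qed

lemma Me_const: "Me Q (\<lambda>_. ennreal c) x \<le> ennreal c"
proof (rule Me_least)
  fix Q' assume Q': "is_cube Q'"
  have "(\<integral>\<^sup>+y\<in>Q'. ennreal c \<partial>lebesgue) = ennreal c * emeasure lebesgue Q'"
    using cube_sets[OF Q'] by (simp add: nn_integral_cmult_indicator)
  then show "(\<integral>\<^sup>+y\<in>Q'. ennreal c \<partial>lebesgue) / emeasure lebesgue Q' \<le> ennreal c"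
    using cube_meas_pos[OF Q'] by (simp add: ennreal_mult_divide_eq)
qed

lemma Me_add:
  assumes [measurable]: "g \<in> borel_measurable lebesgue" "h \<in> borel_measurable lebesgue"
  shows "Me Q (\<lambda>y. g y + h y) x \<le> Me Q g x + Me Q h x"
proof (rule Me_least)
  fix Q' assume Q': "is_cube Q'" "Q' \<subseteq> Q" "x \<in> Q'"
  have [measurable]: "Q' \<in> sets lebesgue" using cube_sets[OF Q'(1)] .
  have "(\<integral>\<^sup>+y\<in>Q'. g y + h y \<partial>lebesgue) = (\<integral>\<^sup>+y\<in>Q'. g y \<partial>lebesgue) + (\<integral>\<^sup>+y\<in>Q'. h y \<partial>lebesgue)"
    by (simp add: distrib_right nn_integral_add)
  then have "(\<integral>\<^sup>+y\<in>Q'. g y + h y \<partial>lebesgue) / emeasure lebesgue Q' =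
     (\<integral>\<^sup>+y\<in>Q'. g y \<partial>lebesgue) / emeasure lebesgue Q' + (\<integral>\<^sup>+y\<in>Q'. h y \<partial>lebesgue) / emeasure lebesgue Q'"
    by (simp add: add_divide_distrib_ennreal)
  also have "\<dots> \<le> Me Q g x + Me Q h x"
    by (intro add_mono Me_upper Q')
  finally show "(\<integral>\<^sup>+y\<in>Q'. g y + h y \<partial>lebesgue) / emeasure lebesgue Q' \<le> Me Q g x + Me Q h x" .
qed

lemma Me_suminf:
  assumes [measurable]: "\<And>k. g k \<in> borel_measurable lebesgue"
  shows "Me Q (\<lambda>y. \<Sum>k. c k * g k y) x \<le> (\<Sum>k. c k * Me Q (g k) x)"
proof (rule Me_least)
  fix Q' assume Q': "is_cube Q'" "Q' \<subseteq> Q" "x \<in> Q'"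
  have [measurable]: "Q' \<in> sets lebesgue" using cube_sets[OF Q'(1)] .
  have "(\<integral>\<^sup>+y\<in>Q'. (\<Sum>k. c k * g k y) \<partial>lebesgue) = (\<integral>\<^sup>+y. (\<Sum>k. c k * g k y * indicator Q' y) \<partial>lebesgue)"
    by (simp add: ennreal_suminf_multc)
  also have "\<dots> = (\<Sum>k. \<integral>\<^sup>+y. c k * g k y * indicator Q' y \<partial>lebesgue)"
    by (rule nn_integral_suminf) simp
  also have "\<dots> = (\<Sum>k. c k * (\<integral>\<^sup>+y\<in>Q'. g k y \<partial>lebesgue))"
    by (simp add: nn_integral_cmult mult.assoc)
  finally have eq: "(\<integral>\<^sup>+y\<in>Q'. (\<Sum>k. c k * g k y) \<partial>lebesgue) = (\<Sum>k. c k * (\<integral>\<^sup>+y\<in>Q'. g k y \<partial>lebesgue))" .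
  have "(\<integral>\<^sup>+y\<in>Q'. (\<Sum>k. c k * g k y) \<partial>lebesgue) / emeasure lebesgue Q'
      = (\<Sum>k. c k * ((\<integral>\<^sup>+y\<in>Q'. g k y \<partial>lebesgue) / emeasure lebesgue Q'))"
    unfolding eq divide_ennreal_def by (subst ennreal_suminf_multc[symmetric]) (simp add: mult.assoc)
  also have "\<dots> \<le> (\<Sum>k. c k * Me Q (g k) x)"
    by (intro suminf_le mult_left_mono Me_upper Q') auto
  finally show "(\<integral>\<^sup>+y\<in>Q'. (\<Sum>k. c k * g k y) \<partial>lebesgue) / emeasure lebesgue Q' \<le> (\<Sum>k. c k * Me Q (g k) x)" .
qed


lemma div_anti:
  fixes A :: ennreal
  assumes "0 < c'" "c' \<le> c"
  shows "A / ennreal c \<le> A / ennreal c'"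
proof -
  have "inverse (ennreal c) \<le> inverse (ennreal c')"
    using assms by (simp add: inverse_ennreal frac_le ennreal_leI)
  then show ?thesis unfolding divide_ennreal_def by (rule mult_left_mono) simp
qed

lemma cube_cases:
  assumes "is_cube Q'"
  obtains b l where "l > 0" "Q' = cbox b (b + l *\<^sub>R One)"
  using assms unfolding is_cube_def by blast

lemma cube_subset_iff:
  fixes a b :: "real^'n"
  assumes "l > 0"
  shows "cbox b (b + l *\<^sub>R One) \<subseteq> cbox a (a + L *\<^sub>R One) \<longleftrightarrow> (\<forall>i. a$i \<le> b$i \<and> b$i + l \<le> a$i + L)"
proof
  assume "cbox b (b + l *\<^sub>R One) \<subseteq> cbox a (a + L *\<^sub>R One)"
  moreover have "b \<in> cbox b (b + l *\<^sub>R One)" "b + l *\<^sub>R One \<in> cbox b (b + l *\<^sub>R One)"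
    using assms by (auto simp: mem_cube)
  ultimately have "b \<in> cbox a (a + L *\<^sub>R One)" "b + l *\<^sub>R One \<in> cbox a (a + L *\<^sub>R One)"
    by auto
  then show "\<forall>i. a$i \<le> b$i \<and> b$i + l \<le> a$i + L"
    unfolding mem_cube by simp
qed (auto simp: mem_cube subset_iff intro: order_trans)

lemma comp_real:
  fixes a b x z l L e m bb :: real
  assumes "a \<le> b" "b + l \<le> a + L" "b \<le> x" "x \<le> b + l" "a \<le> z" "z \<le> a + L" "\<bar>z - x\<bar> < e"
    "m = min L (l + e)" "bb = max a (max (b + l) z - m)" "0 < l" "0 < e"
  shows "a \<le> bb \<and> bb + m \<le> a + L \<and> bb \<le> b \<and> b + l \<le> bb + m \<and> bb \<le> z \<and> z \<le> bb + m"
  using assms by (smt (verit))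

lemma cube_extend:
  fixes a b x z :: "real^'n"
  assumes "L > 0" "l > 0" "e > 0" "\<forall>i. a$i \<le> b$i \<and> b$i + l \<le> a$i + L"
    "x \<in> cbox b (b + l *\<^sub>R One)" "z \<in> cbox a (a + L *\<^sub>R One)" "dist z x < e"
  shows "\<exists>b' m. l \<le> m \<and> m \<le> l + e \<and> cbox b (b + l *\<^sub>R One) \<subseteq> cbox b' (b' + m *\<^sub>R One)
     \<and> z \<in> cbox b' (b' + m *\<^sub>R One) \<and> cbox b' (b' + m *\<^sub>R One) \<subseteq> cbox a (a + L *\<^sub>R One)"
proof -
  define m where "m = min L (l + e)"
  define b' where "b' = (\<chi> i. max (a$i) (max (b$i + l) (z$i) - m))"
  have zx: "\<bar>z$i - x$i\<bar> < e" for i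
    using component_le_norm_cart[of "z - x" i] assms(7) by (simp add: dist_norm)
  have lL: "l \<le> L" using spec[OF assms(4), of undefined] by linarith
  have m: "l \<le> m" "m \<le> l + e" "0 < m" using assms lL by (auto simp: m_def)
  have xi: "\<forall>i. b$i \<le> x$i \<and> x$i \<le> b$i + l" using assms(5) by (simp add: mem_cube)
  have zi: "\<forall>i. a$i \<le> z$i \<and> z$i \<le> a$i + L" using assms(6) by (simp add: mem_cube)
  have comp: "a$i \<le> b'$i \<and> b'$i + m \<le> a$i + L \<and> b'$i \<le> b$i \<and> b$i + l \<le> b'$i + m \<and> b'$i \<le> z$i \<and> z$i \<le> b'$i + m" for i
    apply (rule comp_real[where a="a$i" and b="b$i" and x="x$i" and z="z$i" and l=l and L=L and e=e and m=m and bb="b'$i"])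
    using assms(4) xi zi zx[of i] assms(2,3) by (auto simp: m_def b'_def)
  have s1: "cbox b (b + l *\<^sub>R One) \<subseteq> cbox b' (b' + m *\<^sub>R One)"
    using comp m by (subst cube_subset_iff) (auto simp: assms(2))
  have s2: "cbox b' (b' + m *\<^sub>R One) \<subseteq> cbox a (a + L *\<^sub>R One)"
    using comp m by (subst cube_subset_iff) auto
  have s3: "z \<in> cbox b' (b' + m *\<^sub>R One)"
    using comp by (simp add: mem_cube)
  show ?thesis using m s1 s2 s3 by blast
qed
lemma eps_lemma:
  fixes A y :: ennreal
  assumes "l > 0" "y < A / ennreal (l ^ n)"
  shows "\<exists>e>0. y < A / ennreal ((l + e) ^ n)"
proof (cases "A = top")
  case True
  then show ?thesis using assms by (intro exI[of _ 1]) (auto simp: ennreal_top_divide)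
next
  case False
  then obtain Ar where A: "A = ennreal Ar" "Ar \<ge> 0" by (cases A) auto
  have y: "y \<noteq> top" using assms(2) top.not_eq_extremum by fastforce
  then obtain yr where yr: "y = ennreal yr" "yr \<ge> 0" by (cases y) auto
  have "yr < Ar / l ^ n"
    using assms A yr by (simp add: divide_ennreal ennreal_less_iff)
  then have lt: "yr * l ^ n < Ar" using assms(1) by (simp add: field_simps)
  have "((\<lambda>t. yr * (l + t) ^ n) \<longlongrightarrow> yr * (l + 0) ^ n) (at_right 0)"
    by (intro tendsto_intros)
  then have "eventually (\<lambda>t. yr * (l + t) ^ n < Ar) (at_right 0)"
    using lt by (auto intro: order_tendstoD)
  moreover have "eventually (\<lambda>t. (0::real) < t) (at_right 0)"
    by (simp add: eventually_at_right_less)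
  ultimately have "eventually (\<lambda>t. 0 < t \<and> yr * (l + t) ^ n < Ar) (at_right (0::real))"
    by (rule eventually_elim2) auto
  then obtain e where e: "0 < e" "yr * (l + e) ^ n < Ar"
    using eventually_happens'[OF trivial_limit_at_right_real] by blast
  have "yr < Ar / (l + e) ^ n" using e assms(1) by (simp add: field_simps)
  then show ?thesis using e A yr assms(1)
    by (intro exI[of _ e]) (simp add: divide_ennreal ennreal_less_iff)
qed


lemma Me_measurable:
  fixes Q :: "(real^'n) set"
  assumes "is_cube Q"
  shows "Me Q g \<in> borel_measurable lebesgue"
proof (rule borel_measurableI_greater)
  fix y :: ennreal
  obtain a L where L: "L > 0" "Q = cbox a (a + L *\<^sub>R One)" using cube_cases[OF assms] by blast
  let ?S = "{x. y < Me Q g x}"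
  have "openin (top_of_set Q) ?S"
    unfolding openin_euclidean_subtopology_iff
  proof (intro conjI ballI)
    show "?S \<subseteq> Q" using Me_outside by fastforce
    fix x assume "x \<in> ?S"
    then obtain Q' where Q': "is_cube Q'" "Q' \<subseteq> Q" "x \<in> Q'"
        "y < (\<integral>\<^sup>+z\<in>Q'. g z \<partial>lebesgue) / emeasure lebesgue Q'"
      unfolding Me_def less_SUP_iff by auto
    obtain b l where bl: "l > 0" "Q' = cbox b (b + l *\<^sub>R One)" using cube_cases[OF Q'(1)] by blast
    have "y < (\<integral>\<^sup>+z\<in>Q'. g z \<partial>lebesgue) / ennreal (l ^ CARD('n))"
      using Q'(4) bl by (simp add: cube_emeasure)
    then obtain e where e: "e > 0" "y < (\<integral>\<^sup>+z\<in>Q'. g z \<partial>lebesgue) / ennreal ((l + e) ^ CARD('n))"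
      using eps_lemma[OF bl(1)] by blast
    show "\<exists>e>0. \<forall>x'\<in>Q. dist x' x < e \<longrightarrow> x' \<in> ?S"
    proof (intro exI[of _ e] conjI ballI impI)
      show "e > 0" by (rule e)
      fix z assume z: "z \<in> Q" "dist z x < e"
      have sub: "\<forall>i. a$i \<le> b$i \<and> b$i + l \<le> a$i + L"
        using Q'(2) bl L cube_subset_iff by blast
      obtain b' m where bm: "l \<le> m" "m \<le> l + e" "Q' \<subseteq> cbox b' (b' + m *\<^sub>R One)"
        "z \<in> cbox b' (b' + m *\<^sub>R One)" "cbox b' (b' + m *\<^sub>R One) \<subseteq> Q"
        using cube_extend[OF L(1) bl(1) e(1) sub, of x z] Q'(3) z bl L by auto
      have mpos: "m > 0" using bm bl by linarith
      have cub: "is_cube (cbox b' (b' + m *\<^sub>R One))" unfolding is_cube_def using mpos by blast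
      note e(2)
      also have "(\<integral>\<^sup>+z\<in>Q'. g z \<partial>lebesgue) / ennreal ((l + e) ^ CARD('n))
          \<le> (\<integral>\<^sup>+z\<in>cbox b' (b' + m *\<^sub>R One). g z \<partial>lebesgue) / ennreal (m ^ CARD('n))"
      proof -
        have "(\<integral>\<^sup>+z\<in>Q'. g z \<partial>lebesgue) \<le> (\<integral>\<^sup>+z\<in>cbox b' (b' + m *\<^sub>R One). g z \<partial>lebesgue)"
          using bm(3) by (intro nn_integral_mono) (auto split: split_indicator)
        then have "(\<integral>\<^sup>+z\<in>Q'. g z \<partial>lebesgue) / ennreal ((l + e) ^ CARD('n))
          \<le> (\<integral>\<^sup>+z\<in>cbox b' (b' + m *\<^sub>R One). g z \<partial>lebesgue) / ennreal ((l + e) ^ CARD('n))"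
          by (rule divide_right_mono_ennreal)
        also have "\<dots> \<le> (\<integral>\<^sup>+z\<in>cbox b' (b' + m *\<^sub>R One). g z \<partial>lebesgue) / ennreal (m ^ CARD('n))"
          using mpos bm(2) by (intro div_anti power_mono) auto
        finally show ?thesis .
      qed
      also have "\<dots> \<le> Me Q g z"
        using Me_upper[OF cub bm(5) bm(4), of g] mpos by (simp add: cube_emeasure)
      finally show "z \<in> ?S" by simp
    qed
  qed
  then have "?S \<in> sets lebesgue"
    by (rule lebesgue_openin) (simp add: L(2))
  then show "{x \<in> space lebesgue. y < Me Q g x} \<in> sets lebesgue" by simp
qed

lemma count_subadd:
  assumes "countable I" "\<And>i. i \<in> I \<Longrightarrow> X i \<in> sets M"
  shows "emeasure M (\<Union>i\<in>I. X i) \<le> (\<integral>\<^sup>+i. emeasure M (X i) \<partial>count_space I)"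
proof -
  have U: "(\<Union>i\<in>I. X i) \<in> sets M" using assms by (intro sets.countable_UN'') auto
  have "emeasure M (\<Union>i\<in>I. X i) = (\<integral>\<^sup>+x. indicator (\<Union>i\<in>I. X i) x \<partial>M)"
    using U by (simp add: nn_integral_indicator)
  also have "\<dots> \<le> (\<integral>\<^sup>+x. (\<integral>\<^sup>+i. indicator (X i) x \<partial>count_space I) \<partial>M)"
  proof (rule nn_integral_mono)
    fix x
    show "indicator (\<Union>i\<in>I. X i) x \<le> (\<integral>\<^sup>+i. indicator (X i) x \<partial>count_space I)"
    proof (cases "x \<in> (\<Union>i\<in>I. X i)")
      case True
      then obtain j where "j \<in> I" "x \<in> X j" by auto
      then have "(indicator (X j) x :: ennreal) \<le> (\<integral>\<^sup>+i. indicator (X i) x \<partial>count_space I)"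
        by (intro nn_integral_ge_point[where p="\<lambda>i. indicator (X i) x"])
      then show ?thesis using True \<open>x \<in> X j\<close> by simp
    qed simp
  qed
  also have "\<dots> = (\<integral>\<^sup>+i. (\<integral>\<^sup>+x. indicator (X i) x \<partial>M) \<partial>count_space I)"
    using assms by (intro nn_integral_count_space_nn_integral) auto
  also have "\<dots> = (\<integral>\<^sup>+i. emeasure M (X i) \<partial>count_space I)"
    using assms by (intro nn_integral_cong) (simp add: nn_integral_indicator)
  finally show ?thesis .
qed

lemma cube_in_cball:
  fixes b :: "real^'n"
  assumes "l > 0"
  shows "cbox b (b + l *\<^sub>R One) \<subseteq> cball (b + (l/2) *\<^sub>R One) (l * CARD('n))"
proof
  fix z assume z: "z \<in> cbox b (b + l *\<^sub>R One)"
  have "norm ((b + (l/2) *\<^sub>R One) - z) \<le> (\<Sum>i\<in>UNIV. \<bar>((b + (l/2) *\<^sub>R One) - z) $ i\<bar>)"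
    by (rule norm_le_l1_cart)
  also have "\<dots> \<le> of_nat (card (UNIV::'n set)) * l"
  proof (rule sum_bounded_above)
    fix i :: 'n
    show "\<bar>((b + (l/2) *\<^sub>R One) - z) $ i\<bar> \<le> l"
      using z assms unfolding mem_cube by (auto dest: spec[of _ i])
  qed
  finally show "z \<in> cball (b + (l/2) *\<^sub>R One) (l * CARD('n))"
    by (simp add: dist_norm mult.commute)
qed

lemma cball_emeasure_le:
  fixes c :: "real^'n"
  assumes "R > 0"
  shows "emeasure lebesgue (cball c R) \<le> ennreal ((2 * R) ^ CARD('n))"
proof -
  have "cball c R \<subseteq> cbox (c - R *\<^sub>R One) ((c - R *\<^sub>R One) + (2 * R) *\<^sub>R One)"
  proof
    fix z assume "z \<in> cball c R"
    then have h: "\<bar>(z - c) $ i\<bar> \<le> R" for i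
      using component_le_norm_cart[of "z - c" i] by (simp add: dist_norm norm_minus_commute)
    show "z \<in> cbox (c - R *\<^sub>R One) ((c - R *\<^sub>R One) + (2 * R) *\<^sub>R One)"
      unfolding mem_cube
    proof
      fix i
      have "\<bar>z $ i - c $ i\<bar> \<le> R" using h[of i] by simp
      then show "(c - R *\<^sub>R One) $ i \<le> z $ i \<and> z $ i \<le> (c - R *\<^sub>R One) $ i + 2 * R"
        by simp linarith
    qed
  qed
  then have "emeasure lebesgue (cball c R) \<le> emeasure lebesgue (cbox (c - R *\<^sub>R One) ((c - R *\<^sub>R One) + (2 * R) *\<^sub>R One))"
    by (intro emeasure_mono) auto
  also have "\<dots> = ennreal ((2 * R) ^ CARD('n))"
    using assms by (intro cube_emeasure) auto
  finally show ?thesis .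
qed

lemma avg_gt:
  fixes A c E :: ennreal
  assumes "c < A / E" "E \<noteq> 0" "E \<noteq> top"
  shows "c * E \<le> A"
proof (rule ccontr)
  assume "\<not> c * E \<le> A"
  then have "A \<le> E * c" by (simp add: mult.commute)
  then have "A / E \<le> c" using assms by (intro divide_le_posI_ennreal) (auto simp: zero_less_iff_neq_zero)
  then show False using assms(1) by simp
qed


lemma weak11:
  fixes Q :: "(real^'n) set"
  assumes Q: "is_cube Q" and g[measurable]: "g \<in> borel_measurable lebesgue" and t: "t > 0"
  shows "emeasure lebesgue {x. ennreal t < Me Q g x}
     \<le> ennreal ((10 * real CARD('n)) ^ CARD('n) / t) * (\<integral>\<^sup>+x\<in>Q. g x \<partial>lebesgue)"
proof -
  obtain a L where L: "L > 0" "Q = cbox a (a + L *\<^sub>R One)" using cube_cases[OF Q] by blast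
  define n where "n = CARD('n)"
  have npos: "n > 0" unfolding n_def by simp
  define cube where "cube k = cbox (fst k) (fst k + snd k *\<^sub>R One)" for k :: "(real^'n) \<times> real"
  define ctr where "ctr k = fst k + (snd k / 2) *\<^sub>R One" for k :: "(real^'n) \<times> real"
  define rad where "rad k = snd k * n" for k :: "(real^'n) \<times> real"
  define K where "K = {k. snd k > 0 \<and> cube k \<subseteq> Q \<and>
      ennreal t * ennreal (snd k ^ n) \<le> (\<integral>\<^sup>+x\<in>cube k. g x \<partial>lebesgue)}"
  let ?S = "{x. ennreal t < Me Q g x}"
  have S_sub: "?S \<subseteq> (\<Union>k\<in>K. cball (ctr k) (rad k))"
  proof
    fix x assume "x \<in> ?S"
    then obtain Q' where Q': "is_cube Q'" "Q' \<subseteq> Q" "x \<in> Q'"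
        "ennreal t < (\<integral>\<^sup>+z\<in>Q'. g z \<partial>lebesgue) / emeasure lebesgue Q'"
      unfolding Me_def less_SUP_iff by auto
    obtain b l where bl: "l > 0" "Q' = cbox b (b + l *\<^sub>R One)" using cube_cases[OF Q'(1)] by blast
    have "ennreal t * emeasure lebesgue Q' \<le> (\<integral>\<^sup>+z\<in>Q'. g z \<partial>lebesgue)"
      using avg_gt[OF Q'(4)] cube_meas_pos[OF Q'(1)] by auto
    then have "(b, l) \<in> K" using bl Q' by (simp add: K_def cube_def cube_emeasure n_def)
    moreover have "x \<in> cball (ctr (b, l)) (rad (b, l))"
      using cube_in_cball[OF bl(1), of b] Q'(3) bl by (auto simp: ctr_def rad_def n_def)
    ultimately show "x \<in> (\<Union>k\<in>K. cball (ctr k) (rad k))" by blast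
  qed
  have rad: "0 < rad k \<and> rad k \<le> L * n" if "k \<in> K" for k
  proof -
    have "snd k > 0" "cube k \<subseteq> Q" using that by (auto simp: K_def)
    then have "\<forall>i. a$i \<le> fst k $ i \<and> fst k $ i + snd k \<le> a$i + L"
      using cube_subset_iff[of "snd k" "fst k" a L] L by (simp add: cube_def)
    then have "snd k \<le> L" using spec[of _ undefined] by fastforce
    then show ?thesis using \<open>snd k > 0\<close> npos by (simp add: rad_def)
  qed
  obtain C where C: "countable C" "C \<subseteq> K"
     "pairwise (\<lambda>i j. disjnt (cball (ctr i) (rad i)) (cball (ctr j) (rad j))) C"
     "?S \<subseteq> (\<Union>i\<in>C. cball (ctr i) (5 * rad i))"
    using Vitali_covering_lemma_cballs[OF S_sub rad] by blast
  have cube_sets': "cube i \<in> sets lebesgue" for i unfolding cube_def by simp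
  have "emeasure lebesgue ?S \<le> emeasure lebesgue (\<Union>i\<in>C. cball (ctr i) (5 * rad i))"
    using C by (intro emeasure_mono sets.countable_UN'') auto
  also have "\<dots> \<le> (\<integral>\<^sup>+i. emeasure lebesgue (cball (ctr i) (5 * rad i)) \<partial>count_space C)"
    using C by (intro count_subadd) auto
  also have "\<dots> \<le> (\<integral>\<^sup>+i. ennreal ((10 * real CARD('n)) ^ CARD('n) / t) * (\<integral>\<^sup>+x\<in>cube i. g x \<partial>lebesgue) \<partial>count_space C)"
  proof (rule nn_integral_mono)
    fix i assume "i \<in> space (count_space C)"
    then have iK: "i \<in> K" using C by auto
    then have l: "snd i > 0" and int: "ennreal t * ennreal (snd i ^ n) \<le> (\<integral>\<^sup>+x\<in>cube i. g x \<partial>lebesgue)"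
      by (auto simp: K_def)
    have "emeasure lebesgue (cball (ctr i) (5 * rad i)) \<le> ennreal ((2 * (5 * rad i)) ^ CARD('n))"
      using rad[OF iK] by (intro cball_emeasure_le) auto
    also have "(2 * (5 * rad i)) ^ CARD('n) = (10 * real n) ^ n / t * (t * snd i ^ n)"
      using t by (simp add: rad_def n_def power_mult_distrib field_simps)
    also have "ennreal \<dots> = ennreal ((10 * real n) ^ n / t) * (ennreal t * ennreal (snd i ^ n))"
    proof -
      have "ennreal ((10 * real n) ^ n / t * (t * snd i ^ n)) = ennreal ((10 * real n) ^ n / t) * ennreal (t * snd i ^ n)"
        using t l by (intro ennreal_mult) auto
      moreover have "ennreal (t * snd i ^ n) = ennreal t * ennreal (snd i ^ n)"
        using t l by (intro ennreal_mult) auto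
      ultimately show ?thesis by simp
    qed
    also have "\<dots> \<le> ennreal ((10 * real n) ^ n / t) * (\<integral>\<^sup>+x\<in>cube i. g x \<partial>lebesgue)"
      by (intro mult_left_mono int) simp
    finally show "emeasure lebesgue (cball (ctr i) (5 * rad i))
       \<le> ennreal ((10 * real CARD('n)) ^ CARD('n) / t) * (\<integral>\<^sup>+x\<in>cube i. g x \<partial>lebesgue)"
      by (simp add: n_def)
  qed
  also have "\<dots> = ennreal ((10 * real CARD('n)) ^ CARD('n) / t) * (\<integral>\<^sup>+i. (\<integral>\<^sup>+x\<in>cube i. g x \<partial>lebesgue) \<partial>count_space C)"
    by (rule nn_integral_cmult) simp
  also have "(\<integral>\<^sup>+i. (\<integral>\<^sup>+x\<in>cube i. g x \<partial>lebesgue) \<partial>count_space C)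
      = emeasure (density lebesgue g) (\<Union>i\<in>C. cube i)"
  proof -
    have disj: "disjoint_family_on cube C"
      unfolding disjoint_family_on_def
    proof (intro ballI impI)
      fix i j assume "i \<in> C" "j \<in> C" "i \<noteq> j"
      then have "disjnt (cball (ctr i) (rad i)) (cball (ctr j) (rad j))"
        using C(3) by (auto simp: pairwise_def)
      moreover have ip: "snd i > 0" "snd j > 0" using \<open>i \<in> C\<close> \<open>j \<in> C\<close> C(2) by (auto simp: K_def)
      moreover have "cube i \<subseteq> cball (ctr i) (rad i)" "cube j \<subseteq> cball (ctr j) (rad j)"
        using cube_in_cball[OF ip(1), of "fst i"] cube_in_cball[OF ip(2), of "fst j"]
        by (simp_all add: cube_def ctr_def rad_def n_def)
      ultimately show "cube i \<inter> cube j = {}" by (auto simp: disjnt_def)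
    qed
    have "emeasure (density lebesgue g) (\<Union>i\<in>C. cube i) = (\<integral>\<^sup>+i. emeasure (density lebesgue g) (cube i) \<partial>count_space C)"
      using C(1) disj by (intro emeasure_UN_countable) (auto simp: cube_sets')
    also have "\<dots> = (\<integral>\<^sup>+i. (\<integral>\<^sup>+x\<in>cube i. g x \<partial>lebesgue) \<partial>count_space C)"
      by (intro nn_integral_cong) (simp add: emeasure_density cube_sets')
    finally show ?thesis by simp
  qed
  also have "emeasure (density lebesgue g) (\<Union>i\<in>C. cube i) \<le> emeasure (density lebesgue g) Q"
    using C(2) by (intro emeasure_mono) (auto simp: K_def L(2))
  also have "\<dots> = (\<integral>\<^sup>+x\<in>Q. g x \<partial>lebesgue)"
    by (simp add: emeasure_density L(2))
  finally show ?thesis by (simp add: mult_left_mono)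
qed

lemma finite_Q: "is_cube Q \<Longrightarrow> finite_measure (lebesgue_on Q)"
  by (rule finite_measureI) (simp add: emeasure_restrict_space cube_sets cube_meas_pos space_restrict_space)

lemma FTC_sq:
  assumes "r \<ge> 0"
  shows "(\<integral>\<^sup>+s\<in>{0..r/2}. ennreal (8 * s) \<partial>lborel) = ennreal (r ^ 2)"
proof -
  have "(\<integral>\<^sup>+s\<in>{0..r/2}. ennreal (8 * s) \<partial>lborel) = ennreal ((\<lambda>s. 4 * s^2) (r/2) - (\<lambda>s. 4 * s^2) 0)"
    using assms by (intro nn_integral_FTC_Icc) (auto intro!: derivative_eq_intros)
  also have "(\<lambda>s. 4 * s^2) (r/2) - (\<lambda>s. 4 * s^2) 0 = r^2" by (simp add: power2_eq_square)
  finally show ?thesis .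
qed

lemma layer_sq:
  fixes a :: ennreal
  shows "a ^ 2 \<le> (\<integral>\<^sup>+s. (if 0 \<le> s \<and> ennreal (2 * s) \<le> a then ennreal (8 * s) else 0) \<partial>lborel)"
proof (cases a)
  case (real r)
  have "(\<integral>\<^sup>+s. (if 0 \<le> s \<and> ennreal (2 * s) \<le> a then ennreal (8 * s) else 0) \<partial>lborel)
      = (\<integral>\<^sup>+s\<in>{0..r/2}. ennreal (8 * s) \<partial>lborel)"
    using real by (intro nn_integral_cong) (auto simp: ennreal_le_iff split: split_indicator)
  also have "\<dots> = ennreal (r ^ 2)" using real by (intro FTC_sq) auto
  finally show ?thesis using real by (simp add: ennreal_power)
next
  case top
  let ?X = "(\<integral>\<^sup>+s. (if 0 \<le> s \<and> ennreal (2 * s) \<le> a then ennreal (8 * s) else 0) \<partial>lborel)"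
  have ge: "ennreal (r ^ 2) \<le> ?X" if "r \<ge> 0" for r
  proof -
    have "ennreal (r ^ 2) = (\<integral>\<^sup>+s\<in>{0..r/2}. ennreal (8 * s) \<partial>lborel)" using FTC_sq[OF that] by simp
    also have "\<dots> \<le> ?X" using top by (intro nn_integral_mono) (auto split: split_indicator)
    finally show ?thesis .
  qed
  have "?X = top"
  proof (rule ccontr)
    assume "?X \<noteq> top"
    then obtain x where x: "?X = ennreal x" "x \<ge> 0" by (cases ?X) auto
    have "ennreal ((x + 1) ^ 2) \<le> ennreal x" using ge[of "x + 1"] x by simp
    then have "(x + 1) ^ 2 \<le> x" using x by (simp add: ennreal_le_iff)
    moreover have "(x + 1)^2 = x*x + 2*x + 1" by (simp add: power2_eq_square algebra_simps)
    moreover have "0 \<le> x*x" using x by simp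
    ultimately show False using x by linarith
  qed
  then show ?thesis using top by simp
qed

lemma level_incl:
  fixes Q :: "(real^'n) set"
  assumes Q: "is_cube Q" and g[measurable]: "g \<in> borel_measurable lebesgue" and s: "s > 0"
    and x: "ennreal (2 * s) \<le> Me Q g x"
  shows "ennreal (s / 2) < Me Q (\<lambda>y. if ennreal (s / 2) < g y then g y else 0) x"
proof (rule ccontr)
  let ?g1 = "\<lambda>y. if ennreal (s / 2) < g y then g y else 0"
  assume "\<not> ennreal (s / 2) < Me Q ?g1 x"
  then have le: "Me Q ?g1 x \<le> ennreal (s / 2)" by simp
  have "Me Q g x \<le> Me Q (\<lambda>y. ?g1 y + ennreal (s / 2)) x"
    by (rule Me_mono) (auto simp: not_less)
  also have "\<dots> \<le> Me Q ?g1 x + Me Q (\<lambda>_. ennreal (s / 2)) x"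
    by (rule Me_add) auto
  also have "\<dots> \<le> ennreal (s / 2) + ennreal (s / 2)"
    by (intro add_mono le Me_const)
  also have "\<dots> = ennreal s" using s by (simp flip: ennreal_plus)
  finally have "ennreal (2 * s) \<le> ennreal s" using x by simp
  then show False using s by (simp add: ennreal_le_iff)
qed

lemma emeasure_half_level:
  fixes a :: ennreal
  shows "emeasure lborel {s. 0 < s \<and> ennreal (s / 2) < a} \<le> 2 * a"
proof (cases a)
  case (real r)
  then have "{s. 0 < s \<and> ennreal (s / 2) < a} = {0<..<2 * r}"
    by (auto simp: ennreal_less_iff)
  then show ?thesis using real by (simp add: ennreal_mult)
qed simp

lemma L2_bound:
  fixes Q :: "(real^'n) set"
  assumes Q: "is_cube Q" and g[measurable]: "g \<in> borel_measurable lebesgue"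
  shows "(\<integral>\<^sup>+x\<in>Q. (Me Q g x)^2 \<partial>lebesgue)
     \<le> ennreal (32 * (10 * real CARD('n)) ^ CARD('n)) * (\<integral>\<^sup>+x\<in>Q. (g x)^2 \<partial>lebesgue)"
proof -
  define Kw where "Kw = (10 * real CARD('n)) ^ CARD('n)"
  have Kw: "Kw > 0" unfolding Kw_def by simp
  let ?M = "lebesgue_on Q"
  have QS[measurable]: "Q \<in> sets lebesgue" using cube_sets[OF Q] .
  interpret M: finite_measure ?M using finite_Q[OF Q] .
  interpret P: pair_sigma_finite ?M lborel
    by (simp add: pair_sigma_finite_def M.sigma_finite_measure_axioms lborel.sigma_finite_measure_axioms)
  have Mg[measurable]: "Me Q g \<in> borel_measurable ?M"
    using Me_measurable[OF Q] by (rule measurable_restrict_space1)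
  have gM[measurable]: "g \<in> borel_measurable ?M"
    using g by (rule measurable_restrict_space1)
  have "(\<integral>\<^sup>+x\<in>Q. (Me Q g x)^2 \<partial>lebesgue) = (\<integral>\<^sup>+x. (Me Q g x)^2 \<partial>?M)"
    by (simp add: nn_integral_restrict_space)
  also have "\<dots> \<le> (\<integral>\<^sup>+x. (\<integral>\<^sup>+s. (if 0 \<le> s \<and> ennreal (2 * s) \<le> Me Q g x then ennreal (8 * s) else 0) \<partial>lborel) \<partial>?M)"
    by (intro nn_integral_mono layer_sq)
  also have "\<dots> = (\<integral>\<^sup>+s. (\<integral>\<^sup>+x. (if 0 \<le> s \<and> ennreal (2 * s) \<le> Me Q g x then ennreal (8 * s) else 0) \<partial>?M) \<partial>lborel)"
    by (rule P.Fubini'[symmetric]) measurable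
  also have "\<dots> \<le> (\<integral>\<^sup>+s. (\<integral>\<^sup>+x. (if 0 < s then ennreal (16 * Kw) * (if ennreal (s / 2) < g x then g x else 0) else 0) \<partial>?M) \<partial>lborel)"
  proof (rule nn_integral_mono)
    fix s :: real
    show "(\<integral>\<^sup>+x. (if 0 \<le> s \<and> ennreal (2 * s) \<le> Me Q g x then ennreal (8 * s) else 0) \<partial>?M)
      \<le> (\<integral>\<^sup>+x. (if 0 < s then ennreal (16 * Kw) * (if ennreal (s / 2) < g x then g x else 0) else 0) \<partial>?M)"
    proof (cases "0 < s")
      case False
      then have "(\<integral>\<^sup>+x. (if 0 \<le> s \<and> ennreal (2 * s) \<le> Me Q g x then ennreal (8 * s) else 0) \<partial>?M) = (\<integral>\<^sup>+x. 0 \<partial>?M)"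
        by (intro nn_integral_cong) auto
      then show ?thesis by simp
    next
      case True
      define g1 where "g1 = (\<lambda>y. if ennreal (s / 2) < g y then g y else 0)"
      have g1[measurable]: "g1 \<in> borel_measurable lebesgue" unfolding g1_def by measurable
      have "(\<integral>\<^sup>+x. (if 0 \<le> s \<and> ennreal (2 * s) \<le> Me Q g x then ennreal (8 * s) else 0) \<partial>?M)
          = (\<integral>\<^sup>+x. ennreal (8 * s) * indicator {x \<in> space ?M. ennreal (2 * s) \<le> Me Q g x} x \<partial>?M)"
        using True by (intro nn_integral_cong) (auto split: split_indicator)
      also have "\<dots> = ennreal (8 * s) * emeasure ?M {x \<in> space ?M. ennreal (2 * s) \<le> Me Q g x}"
        by (intro nn_integral_cmult_indicator) measurable
      also have "emeasure ?M {x \<in> space ?M. ennreal (2 * s) \<le> Me Q g x}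
          = emeasure lebesgue {x \<in> Q. ennreal (2 * s) \<le> Me Q g x}"
      proof -
        have "{x \<in> space ?M. ennreal (2 * s) \<le> Me Q g x} \<in> sets ?M" by measurable
        then show ?thesis
          by (subst emeasure_restrict_space) (auto simp: space_restrict_space sets_restrict_space_iff)
      qed
      also have "\<dots> \<le> emeasure lebesgue {x. ennreal (s / 2) < Me Q g1 x}"
      proof (rule emeasure_mono)
        show "{x \<in> Q. ennreal (2 * s) \<le> Me Q g x} \<subseteq> {x. ennreal (s / 2) < Me Q g1 x}"
          using level_incl[OF Q g True] by (auto simp: g1_def)
        have "Me Q g1 \<in> borel_measurable lebesgue" by (rule Me_measurable[OF Q])
        then have "{x \<in> space lebesgue. ennreal (s / 2) < Me Q g1 x} \<in> sets lebesgue" by measurable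
        then show "{x. ennreal (s / 2) < Me Q g1 x} \<in> sets lebesgue" by simp
      qed
      also have "\<dots> \<le> ennreal (Kw / (s / 2)) * (\<integral>\<^sup>+x\<in>Q. g1 x \<partial>lebesgue)"
        using weak11[OF Q g1, of "s/2"] True by (simp add: Kw_def)
      finally have "(\<integral>\<^sup>+x. (if 0 \<le> s \<and> ennreal (2 * s) \<le> Me Q g x then ennreal (8 * s) else 0) \<partial>?M)
          \<le> ennreal (8 * s) * (ennreal (Kw / (s / 2)) * (\<integral>\<^sup>+x\<in>Q. g1 x \<partial>lebesgue))"
        by (simp add: mult_left_mono)
      also have "\<dots> = ennreal (16 * Kw) * (\<integral>\<^sup>+x. g1 x \<partial>?M)"
      proof -
        have "ennreal (8 * s) * ennreal (Kw / (s / 2)) = ennreal (16 * Kw)"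
        proof -
          have "ennreal (8 * s) * ennreal (Kw / (s / 2)) = ennreal (8 * s * (Kw / (s / 2)))"
            using True Kw by (subst ennreal_mult[symmetric]) auto
          also have "8 * s * (Kw / (s / 2)) = 16 * Kw" using True by (simp add: field_simps)
          finally show ?thesis .
        qed
        then show ?thesis by (simp add: nn_integral_restrict_space mult.assoc[symmetric])
      qed
      also have "\<dots> = (\<integral>\<^sup>+x. ennreal (16 * Kw) * g1 x \<partial>?M)"
        by (rule nn_integral_cmult[symmetric]) (rule measurable_restrict_space1[OF g1])
      finally show ?thesis using True by (simp add: g1_def)
    qed
  qed
  also have "\<dots> = (\<integral>\<^sup>+x. (\<integral>\<^sup>+s. (if 0 < s then ennreal (16 * Kw) * (if ennreal (s / 2) < g x then g x else 0) else 0) \<partial>lborel) \<partial>?M)"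
    by (rule P.Fubini') measurable
  also have "\<dots> \<le> (\<integral>\<^sup>+x. ennreal (32 * Kw) * (g x)^2 \<partial>?M)"
  proof (rule nn_integral_mono)
    fix x
    have "(\<integral>\<^sup>+s. (if 0 < s then ennreal (16 * Kw) * (if ennreal (s / 2) < g x then g x else 0) else 0) \<partial>lborel)
        = (\<integral>\<^sup>+s. (ennreal (16 * Kw) * g x) * indicator {s. 0 < s \<and> ennreal (s / 2) < g x} s \<partial>lborel)"
      by (intro nn_integral_cong) (auto split: split_indicator)
    also have "\<dots> = (ennreal (16 * Kw) * g x) * emeasure lborel {s. 0 < s \<and> ennreal (s / 2) < g x}"
      by (intro nn_integral_cmult_indicator) measurable
    also have "\<dots> \<le> (ennreal (16 * Kw) * g x) * (2 * g x)"
      by (intro mult_left_mono emeasure_half_level) simp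
    also have "\<dots> = ennreal (32 * Kw) * (g x)^2"
    proof -
      have "ennreal (32 * Kw) = ennreal 2 * ennreal (16 * Kw)"
        using Kw by (subst ennreal_mult[symmetric]) auto
      then have "ennreal (32 * Kw) = 2 * ennreal (16 * Kw)" by simp
      then show ?thesis by (simp add: power2_eq_square mult_ac)
    qed
    finally show "(\<integral>\<^sup>+s. (if 0 < s then ennreal (16 * Kw) * (if ennreal (s / 2) < g x then g x else 0) else 0) \<partial>lborel)
        \<le> ennreal (32 * Kw) * (g x)^2" .
  qed
  also have "\<dots> = ennreal (32 * Kw) * (\<integral>\<^sup>+x. (g x)^2 \<partial>?M)"
    by (rule nn_integral_cmult) measurable
  also have "\<dots> = ennreal (32 * (10 * real CARD('n)) ^ CARD('n)) * (\<integral>\<^sup>+x\<in>Q. (g x)^2 \<partial>lebesgue)"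
    by (simp add: nn_integral_restrict_space Kw_def)
  finally show ?thesis .
qed

lemma amgm_ennreal:
  fixes F a :: ennreal
  assumes "a > 0" "a \<noteq> top"
  shows "F \<le> F ^ 2 / a + a"
proof (cases "F \<le> a")
  case True
  then show ?thesis by (simp add: add_increasing)
next
  case False
  then have "a \<le> F" by simp
  have "F = F * a / a" using assms by (simp add: ennreal_mult_divide_eq)
  also have "\<dots> \<le> F * F / a" by (intro divide_right_mono_ennreal mult_left_mono \<open>a \<le> F\<close>) simp
  also have "\<dots> = F ^ 2 / a" by (simp add: power2_eq_square)
  finally show ?thesis by (simp add: add_increasing2)
qed

lemma suminf_shift_le:
  fixes f :: "nat \<Rightarrow> ennreal"
  shows "(\<Sum>k. f (Suc k)) \<le> (\<Sum>k. f k)"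
proof -
  have "(\<Sum>k. f (Suc k)) = (SUP n. \<Sum>k<n. f (Suc k))" by (rule suminf_eq_SUP)
  also have "\<dots> \<le> (\<Sum>k. f k)"
  proof (rule SUP_least)
    fix n
    have "(\<Sum>k<n. f (Suc k)) \<le> f 0 + (\<Sum>k<n. f (Suc k))" by (simp add: add_increasing)
    also have "\<dots> = (\<Sum>k<Suc n. f k)" by (rule sum.lessThan_Suc_shift[symmetric])
    also have "\<dots> \<le> (\<Sum>k. f k)" by (rule sum_le_suminf) (auto intro: summableI)
    finally show "(\<Sum>k<n. f (Suc k)) \<le> (\<Sum>k. f k)" .
  qed
  finally show ?thesis .
qed

lemma rubio:
  fixes Q :: "(real^'n) set" and h :: "real^'n \<Rightarrow> ennreal"
  assumes Q: "is_cube Q" and h[measurable]: "h \<in> borel_measurable lebesgue"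
    and hfin: "(\<integral>\<^sup>+x\<in>Q. (h x)^2 \<partial>lebesgue) < \<infinity>"
  shows "\<exists>V C. V \<in> borel_measurable lebesgue \<and> (\<integral>\<^sup>+x\<in>Q. V x \<partial>lebesgue) < \<infinity> \<and> C \<ge> 0 \<and>
     (\<forall>x. h x \<le> V x) \<and> (\<forall>x\<in>Q. Me Q V x \<le> ennreal C * V x)"
proof -
  define K2 where "K2 = 32 * (10 * real CARD('n)) ^ CARD('n)"
  have K2: "K2 \<ge> 1"
  proof -
    have "1 \<le> (10 * real CARD('n)) ^ CARD('n)"
    proof (rule one_le_power)
      have "0 < CARD('n)" by simp
      then have "(1::real) \<le> real CARD('n)" by linarith
      then show "1 \<le> 10 * real CARD('n)" by linarith
    qed
    then show ?thesis unfolding K2_def by linarith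
  qed
  let ?M = "lebesgue_on Q"
  have QS[measurable]: "Q \<in> sets lebesgue" using cube_sets[OF Q] .
  define It where "It k = (Me Q ^^ k) h" for k
  have It_Suc: "It (Suc k) = Me Q (It k)" for k by (simp add: It_def)
  have Itm[measurable]: "It k \<in> borel_measurable lebesgue" for k
    by (cases k) (simp_all add: It_def Me_measurable[OF Q])
  define N where "N k = (\<integral>\<^sup>+x\<in>Q. (It k x)^2 \<partial>lebesgue)" for k
  have N: "N k \<le> ennreal (K2 ^ k) * N 0" for k
  proof (induction k)
    case 0 then show ?case by simp
  next
    case (Suc k)
    have "N (Suc k) \<le> ennreal K2 * N k"
      unfolding N_def It_Suc K2_def by (rule L2_bound[OF Q Itm])
    also have "\<dots> \<le> ennreal K2 * (ennreal (K2 ^ k) * N 0)"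
      by (intro mult_left_mono Suc) simp
    also have "\<dots> = ennreal (K2 ^ Suc k) * N 0"
      using K2 by (simp add: ennreal_mult mult.assoc)
    finally show ?case .
  qed
  define E where "E = emeasure lebesgue Q"
  have E: "E < \<infinity>" using cube_meas_pos[OF Q] by (simp add: E_def less_top)
  have intIt: "(\<integral>\<^sup>+x\<in>Q. It k x \<partial>lebesgue) \<le> N 0 + ennreal (K2 ^ k) * E" for k
  proof -
    define a where "a = ennreal (K2 ^ k)"
    have a: "a > 0" "a \<noteq> top" using K2 by (auto simp: a_def)
    have "(\<integral>\<^sup>+x\<in>Q. It k x \<partial>lebesgue) = (\<integral>\<^sup>+x. It k x \<partial>?M)"
      by (simp add: nn_integral_restrict_space)
    also have "\<dots> \<le> (\<integral>\<^sup>+x. (It k x)^2 / a + a \<partial>?M)"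
      by (intro nn_integral_mono amgm_ennreal a)
    also have "\<dots> = (\<integral>\<^sup>+x. (It k x)^2 / a \<partial>?M) + (\<integral>\<^sup>+x. a \<partial>?M)"
      by (intro nn_integral_add) (auto intro!: measurable_restrict_space1)
    also have "(\<integral>\<^sup>+x. (It k x)^2 / a \<partial>?M) = (\<integral>\<^sup>+x. (It k x)^2 \<partial>?M) / a"
      by (intro nn_integral_divide) (auto intro!: measurable_restrict_space1)
    also have "(\<integral>\<^sup>+x. (It k x)^2 \<partial>?M) = N k"
      by (simp add: N_def nn_integral_restrict_space)
    also have "N k / a \<le> N 0"
    proof -
      have "N k / a \<le> (a * N 0) / a" unfolding a_def by (intro divide_right_mono_ennreal N)
      also have "\<dots> = N 0"
      proof -
        have "N 0 * a / a = N 0" using a by (intro ennreal_mult_divide_eq) auto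
        then show ?thesis by (simp add: mult.commute)
      qed
      finally show ?thesis .
    qed
    also have "(\<integral>\<^sup>+x. a \<partial>?M) = a * E"
      by (simp add: E_def emeasure_restrict_space space_restrict_space)
    finally show ?thesis by (simp add: a_def add_mono)
  qed
  have N0: "N 0 < \<infinity>" using hfin by (simp add: N_def It_def)
  define c where "c = 1 / (2 * K2)"
  have c: "c > 0" "c \<le> 1/2" using K2 by (auto simp: c_def field_simps)
  define V where "V x = (\<Sum>k. ennreal (c ^ k) * It k x)" for x
  have Vm[measurable]: "V \<in> borel_measurable lebesgue" unfolding V_def by measurable
  have hV: "h x \<le> V x" for x
  proof -
    have "h x = (\<Sum>k<1. ennreal (c ^ k) * It k x)" by (simp add: It_def)
    also have "\<dots> \<le> V x" unfolding V_def by (rule sum_le_suminf) (auto intro: summableI)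
    finally show ?thesis .
  qed
  have intV: "(\<integral>\<^sup>+x\<in>Q. V x \<partial>lebesgue) < \<infinity>"
  proof -
    have "(\<integral>\<^sup>+x\<in>Q. V x \<partial>lebesgue) = (\<integral>\<^sup>+x. V x \<partial>?M)"
      by (simp add: nn_integral_restrict_space)
    also have "\<dots> = (\<Sum>k. \<integral>\<^sup>+x. ennreal (c ^ k) * It k x \<partial>?M)"
      unfolding V_def by (rule nn_integral_suminf) (auto intro!: measurable_restrict_space1)
    also have "\<dots> = (\<Sum>k. ennreal (c ^ k) * (\<integral>\<^sup>+x\<in>Q. It k x \<partial>lebesgue))"
      by (intro suminf_cong) (simp add: nn_integral_cmult measurable_restrict_space1 nn_integral_restrict_space)
    also have "\<dots> \<le> (\<Sum>k. ennreal ((1/2) ^ k) * (N 0 + E))"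
    proof (intro suminf_le)
      fix k
      have ck: "c ^ k * K2 ^ k = (1/2) ^ k"
      proof -
        have "c * K2 = 1/2" using K2 by (simp add: c_def)
        then show ?thesis by (metis power_mult_distrib)
      qed
      have "ennreal (c ^ k) * (\<integral>\<^sup>+x\<in>Q. It k x \<partial>lebesgue) \<le> ennreal (c ^ k) * (N 0 + ennreal (K2 ^ k) * E)"
        by (intro mult_left_mono intIt) simp
      also have "\<dots> = ennreal (c ^ k) * N 0 + ennreal (c ^ k * K2 ^ k) * E"
        using c K2 by (simp add: distrib_left ennreal_mult mult.assoc)
      also have "\<dots> = ennreal (c ^ k) * N 0 + ennreal ((1/2) ^ k) * E"
        by (simp only: ck)
      also have "\<dots> \<le> ennreal ((1/2) ^ k) * N 0 + ennreal ((1/2) ^ k) * E"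
        using c by (intro add_mono mult_right_mono ennreal_leI power_mono) auto
      finally show "ennreal (c ^ k) * (\<integral>\<^sup>+x\<in>Q. It k x \<partial>lebesgue) \<le> ennreal ((1/2) ^ k) * (N 0 + E)"
        by (simp add: distrib_left)
    qed auto
    also have "\<dots> = (\<Sum>k. ennreal ((1/2) ^ k)) * (N 0 + E)"
      by (rule ennreal_suminf_multc)
    finally have le: "(\<integral>\<^sup>+x\<in>Q. V x \<partial>lebesgue) \<le> (\<Sum>k. ennreal ((1/2) ^ k)) * (N 0 + E)" .
    have sm: "(\<lambda>k. (1/2::real) ^ k) sums 2" using geometric_sums[of "1/2::real"] by simp
    have "(\<Sum>k. ennreal ((1/2::real) ^ k)) = ennreal (\<Sum>k. (1/2::real) ^ k)"
      by (rule suminf_ennreal2) (auto intro: sums_summable[OF sm])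
    also have "(\<Sum>k. (1/2::real) ^ k) = 2" using sm by (rule sums_unique[symmetric])
    finally have "(\<Sum>k. ennreal ((1/2::real) ^ k)) = ennreal 2" .
    then have "(\<Sum>k. ennreal ((1/2) ^ k)) * (N 0 + E) < \<infinity>"
      using N0 E by (simp add: ennreal_mult_less_top)
    then show ?thesis using le by (rule le_less_trans[rotated])
  qed
  have A1: "Me Q V x \<le> ennreal (2 * K2) * V x" if "x \<in> Q" for x
  proof -
    have "Me Q V x \<le> (\<Sum>k. ennreal (c ^ k) * Me Q (It k) x)"
      unfolding V_def by (rule Me_suminf) (rule Itm)
    also have "\<dots> = (\<Sum>k. ennreal (2 * K2) * (ennreal (c ^ Suc k) * It (Suc k) x))"
    proof (intro suminf_cong)
      fix k
      have "ennreal (2 * K2) * ennreal (c ^ Suc k) = ennreal (c ^ k)"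
        using K2 c by (simp add: ennreal_mult[symmetric] c_def field_simps)
      then show "ennreal (c ^ k) * Me Q (It k) x = ennreal (2 * K2) * (ennreal (c ^ Suc k) * It (Suc k) x)"
        by (simp add: It_Suc mult.assoc[symmetric])
    qed
    also have "\<dots> = ennreal (2 * K2) * (\<Sum>k. ennreal (c ^ Suc k) * It (Suc k) x)"
      by (rule ennreal_suminf_cmult)
    also have "\<dots> \<le> ennreal (2 * K2) * V x"
      unfolding V_def by (intro mult_left_mono suminf_shift_le[where f="\<lambda>k. ennreal (c ^ k) * It k x"]) simp
    finally show ?thesis .
  qed
  show ?thesis
    using Vm intV hV A1 K2 by (intro exI[of _ V] exI[of _ "2 * K2"]) auto
qed

lemma Lp_A1:
  fixes Q :: "(real^'n) set" and f :: "real^'n \<Rightarrow> real"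
  assumes Q: "is_cube Q" and p: "0 < p" and f: "f \<in> Lp p Q"
  shows "\<exists>v. A1 Q v \<and> (AE x in lebesgue_on Q. \<bar>f x\<bar> powr (p/2) \<le> v x \<and> 1 \<le> v x)"
proof -
  let ?M = "lebesgue_on Q"
  have QS[measurable]: "Q \<in> sets lebesgue" using cube_sets[OF Q] .
  have spM: "space ?M = Q" by (simp add: space_restrict_space)
  have fM[measurable]: "f \<in> borel_measurable ?M" and fint: "(\<integral>\<^sup>+x\<in>Q. ennreal (\<bar>f x\<bar> powr p * 1) \<partial>lebesgue) < \<infinity>"
    using f by (auto simp: Lp_def Lpw_def)
  have fint': "(\<integral>\<^sup>+x. ennreal (\<bar>f x\<bar> powr p) \<partial>?M) < \<infinity>"
    using fint by (simp add: nn_integral_restrict_space)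
  define h where "h x = ennreal (if x \<in> Q then \<bar>f x\<bar> powr (p/2) + 1 else 0)" for x
  have hm[measurable]: "h \<in> borel_measurable lebesgue"
  proof -
    have "(\<lambda>x. \<bar>f x\<bar> powr (p/2) + 1) \<in> borel_measurable ?M" by measurable
    then have "(\<lambda>x. if x \<in> Q then \<bar>f x\<bar> powr (p/2) + 1 else 0) \<in> borel_measurable lebesgue"
      by (subst (asm) measurable_restrict_space_iff) auto
    then show ?thesis unfolding h_def by measurable
  qed
  have hsq: "(h x)^2 \<le> 2 * ennreal (\<bar>f x\<bar> powr p) + 2" if "x \<in> Q" for x
  proof -
    define a where "a = \<bar>f x\<bar> powr (p/2)"
    have a0: "a \<ge> 0" by (simp add: a_def)
    have aa: "a * a = \<bar>f x\<bar> powr p" unfolding a_def by (simp flip: powr_add)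
    have h1: "h x = ennreal (a + 1)" using that by (simp add: h_def a_def)
    have "(h x)^2 = ennreal ((a + 1)^2)" unfolding h1 using a0 by (intro ennreal_power) simp
    also have "\<dots> \<le> ennreal (2 * (a * a) + 2)"
    proof (rule ennreal_leI)
      have "0 \<le> (a - 1)^2" by simp
      then show "(a + 1)^2 \<le> 2 * (a * a) + 2" by (simp add: power2_eq_square algebra_simps)
    qed
    also have "\<dots> = 2 * ennreal (\<bar>f x\<bar> powr p) + 2"
    proof -
      have y0: "0 \<le> \<bar>f x\<bar> powr p" by simp
      have "ennreal (2 * \<bar>f x\<bar> powr p + 2) = ennreal (2 * \<bar>f x\<bar> powr p) + ennreal 2"
        by (rule ennreal_plus) (use y0 in auto)
      moreover have "ennreal (2 * \<bar>f x\<bar> powr p) = ennreal 2 * ennreal (\<bar>f x\<bar> powr p)"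
        by (rule ennreal_mult) auto
      ultimately show ?thesis using aa by simp
    qed
    finally show ?thesis .
  qed
  have hfin: "(\<integral>\<^sup>+x\<in>Q. (h x)^2 \<partial>lebesgue) < \<infinity>"
  proof -
    have "(\<integral>\<^sup>+x\<in>Q. (h x)^2 \<partial>lebesgue) = (\<integral>\<^sup>+x. (h x)^2 \<partial>?M)"
      by (simp add: nn_integral_restrict_space)
    also have "\<dots> \<le> (\<integral>\<^sup>+x. 2 * ennreal (\<bar>f x\<bar> powr p) + 2 \<partial>?M)"
      by (intro nn_integral_mono hsq) (simp add: spM)
    also have "\<dots> = 2 * (\<integral>\<^sup>+x. ennreal (\<bar>f x\<bar> powr p) \<partial>?M) + 2 * emeasure ?M (space ?M)"
      by (simp add: nn_integral_add nn_integral_cmult)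
    also have "\<dots> < \<infinity>"
      using fint' cube_meas_pos[OF Q]
      by (simp add: spM emeasure_restrict_space ennreal_mult_less_top less_top)
    finally show ?thesis .
  qed
  obtain V C where V[measurable]: "V \<in> borel_measurable lebesgue" and Vint: "(\<integral>\<^sup>+x\<in>Q. V x \<partial>lebesgue) < \<infinity>"
    and C: "C \<ge> 0" and hV: "\<And>x. h x \<le> V x" and VA1: "\<And>x. x \<in> Q \<Longrightarrow> Me Q V x \<le> ennreal C * V x"
    using rubio[OF Q hm hfin] by blast
  have VM[measurable]: "V \<in> borel_measurable ?M" by (rule measurable_restrict_space1[OF V])
  have VintM: "(\<integral>\<^sup>+x. V x \<partial>?M) < \<infinity>" using Vint by (simp add: nn_integral_restrict_space)
  have Vfin: "AE x in ?M. V x \<noteq> top"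
    using nn_integral_PInf_AE[OF VM] VintM by simp
  define v where "v x = enn2real (V x)" for x
  have vM[measurable]: "v \<in> borel_measurable ?M" unfolding v_def by measurable
  have Vv: "V x = ennreal (v x)" if "V x \<noteq> top" for x
    using that by (simp add: v_def ennreal_enn2real_if)
  have good: "\<bar>f x\<bar> powr (p/2) \<le> v x \<and> 1 \<le> v x" if "x \<in> Q" "V x \<noteq> top" for x
  proof -
    have "ennreal (\<bar>f x\<bar> powr (p/2) + 1) \<le> ennreal (v x)"
      using hV[of x] that Vv[of x] by (simp add: h_def)
    then have "\<bar>f x\<bar> powr (p/2) + 1 \<le> v x"
      by (subst (asm) ennreal_le_iff) (auto simp: v_def)
    then show ?thesis by (simp add: add_increasing2) (smt (verit) powr_ge_zero)
  qed
  have AEgood: "AE x in ?M. \<bar>f x\<bar> powr (p/2) \<le> v x \<and> 1 \<le> v x"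
    by (rule AE_mp[OF Vfin]) (rule AE_I2, auto simp: spM good)
  have weight: "weight Q v"
    unfolding weight_def
  proof
    show "integrable ?M v"
    proof (rule integrableI_bounded)
      show "v \<in> borel_measurable ?M" by (rule vM)
      have "(\<integral>\<^sup>+x. ennreal (norm (v x)) \<partial>?M) \<le> (\<integral>\<^sup>+x. V x \<partial>?M)"
        by (intro nn_integral_mono) (simp add: v_def ennreal_enn2real_if)
      then show "(\<integral>\<^sup>+x. ennreal (norm (v x)) \<partial>?M) < \<infinity>" using VintM by (rule le_less_trans)
    qed
    show "AE x in ?M. 0 < v x" using AEgood by eventually_elim auto
  qed
  have maxb: "maxQ Q v x \<le> ennreal (C * v x)" if "x \<in> Q" "V x \<noteq> top" for x
  proof -
    have "maxQ Q v x = Me Q (\<lambda>y. ennreal \<bar>v y\<bar>) x" by (rule maxQ_Me)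
    also have "\<dots> \<le> Me Q V x"
      by (rule Me_mono) (simp add: v_def ennreal_enn2real_if)
    also have "\<dots> \<le> ennreal C * V x" by (rule VA1[OF that(1)])
    also have "\<dots> = ennreal (C * v x)" using Vv[OF that(2)] C by (simp add: ennreal_mult v_def)
    finally show ?thesis .
  qed
  have "A1 Q v"
    unfolding A1_def
  proof (intro conjI weight exI[of _ C])
    show "AE x in ?M. maxQ Q v x \<le> ennreal (C * v x)"
      by (rule AE_mp[OF Vfin]) (rule AE_I2, auto simp: spM maxb)
  qed
  then show ?thesis using AEgood by blast
qed

lemma MA1_Lp:
  fixes Q :: "(real^'n) set"
  assumes Q: "is_cube Q" and r: "0 < r" and f: "f \<in> MA1 r Q"
  shows "f \<in> Lp r Q"
proof -
  let ?M = "lebesgue_on Q"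
  have QS[measurable]: "Q \<in> sets lebesgue" using cube_sets[OF Q] .
  obtain w where fm: "f \<in> borel_measurable ?M" and wA1: "A1 Q w"
    and le: "AE x in ?M. \<bar>f x\<bar> powr r \<le> w x"
    using f by (auto simp: MA1_def)
  have wi: "integrable ?M w" using wA1 by (simp add: A1_def weight_def)
  have "(\<integral>\<^sup>+x. ennreal (\<bar>f x\<bar> powr r * 1) \<partial>?M) \<le> (\<integral>\<^sup>+x. ennreal (norm (w x)) \<partial>?M)"
    using le by (intro nn_integral_mono_AE) (auto elim!: eventually_mono intro!: ennreal_leI)
  also have "\<dots> < \<infinity>" using wi by (simp add: integrable_iff_bounded)
  finally show ?thesis using fm by (simp add: Lp_def Lpw_def nn_integral_restrict_space)
qed

lemma Lp_mono:
  fixes Q :: "(real^'n) set"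
  assumes Q: "is_cube Q" and q: "0 < q" "q \<le> p" and f: "f \<in> Lp p Q"
  shows "f \<in> Lp q Q"
proof -
  let ?M = "lebesgue_on Q"
  have QS[measurable]: "Q \<in> sets lebesgue" using cube_sets[OF Q] .
  have fm[measurable]: "f \<in> borel_measurable ?M" and fi: "(\<integral>\<^sup>+x. ennreal (\<bar>f x\<bar> powr p) \<partial>?M) < \<infinity>"
    using f by (auto simp: Lp_def Lpw_def nn_integral_restrict_space)
  have pw: "\<bar>f x\<bar> powr q \<le> \<bar>f x\<bar> powr p + 1" for x
  proof (cases "\<bar>f x\<bar> \<le> 1")
    case True
    then have "\<bar>f x\<bar> powr q \<le> 1" using q by (intro powr_le1) auto
    then show ?thesis by (smt (verit) powr_ge_zero)
  next
    case False
    then have "\<bar>f x\<bar> powr q \<le> \<bar>f x\<bar> powr p" using q by (intro powr_mono) auto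
    then show ?thesis by simp
  qed
  have "(\<integral>\<^sup>+x. ennreal (\<bar>f x\<bar> powr q * 1) \<partial>?M) \<le> (\<integral>\<^sup>+x. ennreal (\<bar>f x\<bar> powr p) + 1 \<partial>?M)"
  proof (rule nn_integral_mono)
    fix x
    have "ennreal (\<bar>f x\<bar> powr q * 1) \<le> ennreal (\<bar>f x\<bar> powr p + 1)"
      using pw[of x] by (intro ennreal_leI) simp
    also have "\<dots> = ennreal (\<bar>f x\<bar> powr p) + ennreal 1"
      by (rule ennreal_plus) auto
    finally show "ennreal (\<bar>f x\<bar> powr q * 1) \<le> ennreal (\<bar>f x\<bar> powr p) + 1" by simp
  qed
  also have "\<dots> = (\<integral>\<^sup>+x. ennreal (\<bar>f x\<bar> powr p) \<partial>?M) + emeasure ?M (space ?M)"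
    by (simp add: nn_integral_add)
  also have "\<dots> < \<infinity>"
    using fi cube_meas_pos[OF Q] by (simp add: space_restrict_space emeasure_restrict_space less_top)
  finally show ?thesis using fm by (simp add: Lp_def Lpw_def nn_integral_restrict_space)
qed

lemma setint_sub:
  assumes "Q' \<subseteq> Q" "Q \<in> sets lebesgue"
  shows "(\<integral>\<^sup>+x\<in>Q'. F x \<partial>lebesgue) = (\<integral>\<^sup>+x. F x * indicator Q' x \<partial>lebesgue_on Q)"
  using assms by (subst nn_integral_restrict_space) (auto intro!: nn_integral_cong split: split_indicator)

lemma ennreal_le_pos: "0 < a \<Longrightarrow> ennreal a \<le> ennreal y \<Longrightarrow> a \<le> y"
  by (cases "0 \<le> y") (auto simp: ennreal_le_iff ennreal_neg)

lemma one_le_power_ennreal: "1 \<le> (A::ennreal) \<Longrightarrow> A \<le> A ^ t \<or> t = 0"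
proof (induction t)
  case (Suc t)
  have "1 \<le> A ^ t"
  proof (induction t)
    case (Suc t) then show ?case using \<open>1 \<le> A\<close> by (simp add: order_trans[OF _ mult_mono[of 1 A 1 "A^t"]])
  qed simp
  then show ?case using Suc.prems by (auto intro: order_trans[OF _ mult_left_mono[of 1 "A^t" A]])
qed simp

lemma pw_inv_powr:
  fixes v :: real
  assumes "1 \<le> v" "t \<ge> 1"
  shows "(inverse (v ^ t)) powr (1 - (1 + real t) / (1 + real t - 1)) = v"
proof -
  have v0: "v > 0" using assms by simp
  have t0: "real t > 0" using assms by simp
  have e: "1 - (1 + real t) / (1 + real t - 1) = - 1 / real t" using t0 by (simp add: field_simps)
  have "inverse (v ^ t) = v powr (- real t)" using v0 by (simp add: powr_minus powr_realpow)
  then have "(inverse (v ^ t)) powr (- 1 / real t) = v powr ((- real t) * (- 1 / real t))"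
    by (simp add: powr_powr)
  also have "(- real t) * (- 1 / real t) = 1" using t0 by simp
  finally show ?thesis using e v0 by simp
qed

lemma young_pw:
  fixes y w q p0 :: real
  assumes q: "1 < q" and w: "0 < w" and y: "0 \<le> y"
  shows "y powr (p0 / q) \<le> y powr p0 * w + w powr (1 - q / (q - 1))"
proof -
  define X where "X = y powr p0 * w"
  define Y where "Y = w powr (1 - q / (q - 1))"
  define r where "r = 1 / q"
  define r' where "r' = 1 - 1 / q"
  have X0: "0 \<le> X" using w by (simp add: X_def)
  have Y0: "0 < Y" using w by (simp add: Y_def)
  have r0: "0 \<le> r" "0 \<le> r'" "r + r' = 1" using q by (auto simp: r_def r'_def)
  have "X powr r = y powr (p0 / q) * w powr (1 / q)"
    using w y by (simp add: X_def r_def powr_mult powr_powr)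
  moreover have "Y powr r' = w powr (- 1 / q)"
  proof -
    have "(1 - q / (q - 1)) * (1 - 1 / q) = - 1 / q" using q by (simp add: field_simps)
    then show ?thesis by (simp add: Y_def r'_def powr_powr)
  qed
  ultimately have "X powr r * Y powr r' = y powr (p0 / q) * (w powr (1 / q) * w powr (- 1 / q))"
    by simp
  also have "w powr (1 / q) * w powr (- 1 / q) = 1"
    using w by (simp flip: powr_add)
  finally have eq: "y powr (p0 / q) = X powr r * Y powr r'" by simp
  define m where "m = max X Y"
  have m0: "0 < m" using Y0 by (simp add: m_def)
  have "X powr r * Y powr r' \<le> m powr r * m powr r'"
    using X0 Y0 r0 by (intro mult_mono powr_mono2) (auto simp: m_def)
  also have "\<dots> = m" using m0 r0 by (simp flip: powr_add)
  also have "\<dots> \<le> X + Y" using X0 Y0 by (simp add: m_def)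
  finally show ?thesis using eq by (simp add: X_def Y_def)
qed

lemma Lp_Ainf:
  fixes Q :: "(real^'n) set"
  assumes Q: "is_cube Q" and p: "0 < p" and p0: "0 < p0" and f: "f \<in> Lp p Q"
  shows "\<exists>w. Ainf Q w \<and> f \<in> Lpw p0 w Q"
proof -
  let ?M = "lebesgue_on Q"
  have QS[measurable]: "Q \<in> sets lebesgue" using cube_sets[OF Q] .
  have spM: "space ?M = Q" by (simp add: space_restrict_space)
  define p1 where "p1 = min p p0"
  have p1: "0 < p1" "p1 \<le> p" "p1 \<le> p0" using p p0 by (auto simp: p1_def)
  have f1: "f \<in> Lp p1 Q" using Lp_mono[OF Q p1(1) p1(2) f] .
  have fm[measurable]: "f \<in> borel_measurable ?M" using f by (simp add: Lp_def Lpw_def)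
  obtain v where vA1: "A1 Q v" and AEv: "AE x in ?M. \<bar>f x\<bar> powr (p1/2) \<le> v x \<and> 1 \<le> v x"
    using Lp_A1[OF Q p1(1) f1] by blast
  have vi: "integrable ?M v" using vA1 by (simp add: A1_def weight_def)
  have vm[measurable]: "v \<in> borel_measurable ?M" using vi by auto
  obtain C where AEC: "AE x in ?M. maxQ Q v x \<le> ennreal (C * v x)"
    using vA1 by (auto simp: A1_def)
  define t where "t = nat \<lceil>2 * p0 / p1\<rceil>"
  have tge: "2 * p0 / p1 \<le> real t" unfolding t_def by linarith
  have "2 \<le> 2 * p0 / p1" using p1 by (simp add: field_simps)
  then have t1: "t \<ge> 1" using tge by linarith
  have pwv: "inverse (y ^ t) powr (1 - (1 + real t) / real t) = y" if "1 \<le> y" for y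
    using pw_inv_powr[OF that t1] by simp
  define w where "w x = inverse (v x ^ t)" for x
  have wm[measurable]: "w \<in> borel_measurable ?M" unfolding w_def by measurable
  have wb: "0 < w x \<and> w x \<le> 1" if "1 \<le> v x" for x
  proof -
    have vt: "1 \<le> v x ^ t" using that by (rule one_le_power)
    then have "inverse (v x ^ t) \<le> inverse 1" by (intro le_imp_inverse_le) auto
    then show ?thesis using vt by (simp add: w_def)
  qed
  have fin: "emeasure ?M (space ?M) < \<infinity>"
    using cube_meas_pos[OF Q] by (simp add: spM emeasure_restrict_space less_top)
  have weight: "weight Q w"
    unfolding weight_def
  proof
    show "integrable ?M w"
    proof (rule integrableI_bounded)
      show "w \<in> borel_measurable ?M" by (rule wm)
      have "AE x in ?M. ennreal (norm (w x)) \<le> 1"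
        using AEv
      proof eventually_elim
        case (elim x) then show ?case using wb[of x] by auto
      qed
      then have "(\<integral>\<^sup>+x. ennreal (norm (w x)) \<partial>?M) \<le> (\<integral>\<^sup>+x. 1 \<partial>?M)"
        by (rule nn_integral_mono_AE)
      also have "\<dots> < \<infinity>" using fin by simp
      finally show "(\<integral>\<^sup>+x. ennreal (norm (w x)) \<partial>?M) < \<infinity>" .
    qed
    show "AE x in ?M. 0 < w x" using AEv by eventually_elim (simp add: wb)
  qed
  have cubebound: "avg Q' w * avg Q' (\<lambda>x. w x powr (1 - (1 + real t) / (1 + real t - 1))) \<le> ennreal (C ^ t)"
    if Q': "is_cube Q'" "Q' \<subseteq> Q" for Q'
  proof -
    define E where "E = emeasure lebesgue Q'"
    have E: "E \<noteq> 0" "E < top" using cube_meas_pos[OF Q'(1)] by (auto simp: E_def less_top)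
    have Q'S[measurable]: "Q' \<in> sets lebesgue" using cube_sets[OF Q'(1)] .
    define A where "A = avg Q' v"
    have AEQ': "AE x in ?M. x \<in> Q' \<longrightarrow> 1 \<le> v x \<and> A \<le> ennreal (C * v x)"
    proof -
      have "AE x in ?M. (\<bar>f x\<bar> powr (p1/2) \<le> v x \<and> 1 \<le> v x) \<and> maxQ Q v x \<le> ennreal (C * v x)"
        using AE_conjI[OF AEv AEC] .
      then show ?thesis
      proof eventually_elim
        case (elim x)
        show ?case
        proof
          assume "x \<in> Q'"
          have "A \<le> maxQ Q v x" unfolding A_def maxQ_def
            by (rule SUP_upper) (use Q' \<open>x \<in> Q'\<close> in auto)
          then show "1 \<le> v x \<and> A \<le> ennreal (C * v x)" using elim by auto
        qed
      qed
    qed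
    have eqv: "avg Q' (\<lambda>x. w x powr (1 - (1 + real t) / (1 + real t - 1))) = A"
    proof -
      have "(\<integral>\<^sup>+x\<in>Q'. ennreal \<bar>w x powr (1 - (1 + real t) / (1 + real t - 1))\<bar> \<partial>lebesgue)
          = (\<integral>\<^sup>+x\<in>Q'. ennreal \<bar>v x\<bar> \<partial>lebesgue)"
        unfolding setint_sub[OF Q'(2) QS]
        using AEQ' by (intro nn_integral_cong_AE) (auto elim!: eventually_mono simp: w_def pwv split: split_indicator)
      then show ?thesis by (simp add: avg_def A_def)
    qed
    have A1: "1 \<le> A"
    proof -
      have "E \<le> (\<integral>\<^sup>+x\<in>Q'. ennreal \<bar>v x\<bar> \<partial>lebesgue)"
      proof -
        have "E = (\<integral>\<^sup>+x. 1 * indicator Q' x \<partial>?M)"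
          using setint_sub[OF Q'(2) QS, of "\<lambda>_. 1"] by (simp add: E_def)
        also have "\<dots> \<le> (\<integral>\<^sup>+x. ennreal \<bar>v x\<bar> * indicator Q' x \<partial>?M)"
          using AEQ' by (intro nn_integral_mono_AE) (auto elim!: eventually_mono split: split_indicator)
        also have "\<dots> = (\<integral>\<^sup>+x\<in>Q'. ennreal \<bar>v x\<bar> \<partial>lebesgue)" using setint_sub[OF Q'(2) QS] by simp
        finally show ?thesis .
      qed
      then have "E / E \<le> A" unfolding A_def avg_def E_def[symmetric] by (rule divide_right_mono_ennreal)
      then show ?thesis using E by (simp add: ennreal_divide_self)
    qed
    have At: "A \<le> A ^ t" using one_le_power_ennreal[OF A1, of t] t1 by auto
    have ptw: "AE x in ?M. ennreal \<bar>w x\<bar> * A ^ t * indicator Q' x \<le> ennreal (C ^ t) * indicator Q' x"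
      using AEQ'
    proof eventually_elim
      case (elim x)
      show ?case
      proof (cases "x \<in> Q'")
        case True
        then have v1: "1 \<le> v x" and Av: "A \<le> ennreal (C * v x)" using elim by auto
        have "1 \<le> ennreal (C * v x)" by (rule order_trans[OF A1 Av])
        then have Cv: "1 \<le> C * v x" by simp
        have "A ^ t \<le> ennreal (C * v x) ^ t" using Av by (rule power_mono) simp
        also have "\<dots> = ennreal ((C * v x) ^ t)" using Cv by (intro ennreal_power) simp
        finally have "ennreal \<bar>w x\<bar> * A ^ t \<le> ennreal \<bar>w x\<bar> * ennreal ((C * v x) ^ t)"
          by (rule mult_left_mono) simp
        also have "\<dots> = ennreal (\<bar>w x\<bar> * (C * v x) ^ t)" using Cv by (simp add: ennreal_mult)
        also have "\<bar>w x\<bar> * (C * v x) ^ t = C ^ t"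
          using v1 by (simp add: w_def power_mult_distrib field_simps)
        finally show ?thesis using True by simp
      qed simp
    qed
    have "avg Q' w * avg Q' (\<lambda>x. w x powr (1 - (1 + real t) / (1 + real t - 1))) = avg Q' w * A"
      by (simp only: eqv)
    also have "\<dots> \<le> avg Q' w * A ^ t" by (intro mult_left_mono At) simp
    also have "\<dots> = (\<integral>\<^sup>+x. ennreal \<bar>w x\<bar> * A ^ t * indicator Q' x \<partial>?M) / E"
    proof -
      have Q'M[measurable]: "Q' \<in> sets ?M" using Q'(2) Q'S by (simp add: sets_restrict_space_iff)
      have "(\<integral>\<^sup>+x. ennreal \<bar>w x\<bar> * indicator Q' x \<partial>?M) * A ^ t = (\<integral>\<^sup>+x. ennreal \<bar>w x\<bar> * indicator Q' x * A ^ t \<partial>?M)"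
        by (rule nn_integral_multc[symmetric]) measurable
      then have "(\<integral>\<^sup>+x. ennreal \<bar>w x\<bar> * A ^ t * indicator Q' x \<partial>?M) = (\<integral>\<^sup>+x. ennreal \<bar>w x\<bar> * indicator Q' x \<partial>?M) * A ^ t"
        by (simp add: mult_ac)
      moreover have aw: "avg Q' w = (\<integral>\<^sup>+x. ennreal \<bar>w x\<bar> * indicator Q' x \<partial>?M) / E"
        unfolding avg_def E_def by (subst setint_sub[OF Q'(2) QS]) (rule refl)
      ultimately show ?thesis
        by (simp only: divide_ennreal_def mult_ac)
    qed
    also have "\<dots> \<le> (\<integral>\<^sup>+x. ennreal (C ^ t) * indicator Q' x \<partial>?M) / E"
      by (intro divide_right_mono_ennreal nn_integral_mono_AE ptw)
    also have "(\<integral>\<^sup>+x. ennreal (C ^ t) * indicator Q' x \<partial>?M) = ennreal (C ^ t) * E"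
      using setint_sub[OF Q'(2) QS, of "\<lambda>_. ennreal (C ^ t)"] by (simp add: nn_integral_cmult_indicator E_def)
    also have "ennreal (C ^ t) * E / E = ennreal (C ^ t)" using E by (simp add: ennreal_mult_divide_eq)
    finally show ?thesis .
  qed
  have Aq: "Aq Q (1 + real t) w"
    unfolding Aq_def Let_def
  proof (intro conjI weight)
    have "(SUP Q'\<in>{Q'. is_cube Q' \<and> Q' \<subseteq> Q}. avg Q' w * avg Q' (\<lambda>x. w x powr (1 - (1 + real t) / (1 + real t - 1))))
        \<le> ennreal (C ^ t)"
      by (rule SUP_least) (use cubebound in blast)
    then show "(SUP Q'\<in>{Q'. is_cube Q' \<and> Q' \<subseteq> Q}. avg Q' w * avg Q' (\<lambda>x. w x powr (1 - (1 + real t) / (1 + real t - 1)))) < \<infinity>"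
      using le_less_trans by fastforce
  qed
  have Ainf: "Ainf Q w" unfolding Ainf_def using Aq t1 by auto
  have fw: "\<bar>f x\<bar> powr p0 * w x \<le> 1" if "\<bar>f x\<bar> powr (p1/2) \<le> v x" "1 \<le> v x" for x
  proof -
    have "\<bar>f x\<bar> powr p0 = (\<bar>f x\<bar> powr (p1/2)) powr (2 * p0 / p1)"
      using p1 by (simp add: powr_powr)
    also have "\<dots> \<le> v x powr (2 * p0 / p1)"
      using that p1 p0 by (intro powr_mono2) auto
    also have "\<dots> \<le> v x powr (real t)" using that tge by (intro powr_mono) auto
    also have "\<dots> = v x ^ t" using that by (simp add: powr_realpow)
    finally have "\<bar>f x\<bar> powr p0 \<le> v x ^ t" .
    moreover have "v x ^ t > 0" using that by simp
    ultimately show ?thesis by (simp add: w_def field_simps)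
  qed
  have "AE x in ?M. ennreal (\<bar>f x\<bar> powr p0 * w x) \<le> 1"
    using AEv
  proof eventually_elim
    case (elim x) then show ?case using fw[of x] by (auto intro: ennreal_leI)
  qed
  then have "(\<integral>\<^sup>+x. ennreal (\<bar>f x\<bar> powr p0 * w x) \<partial>?M) \<le> (\<integral>\<^sup>+x. 1 \<partial>?M)"
    by (rule nn_integral_mono_AE)
  also have "\<dots> < \<infinity>" using fin by simp
  finally have "f \<in> Lpw p0 w Q" using fm by (simp add: Lpw_def nn_integral_restrict_space)
  then show ?thesis using Ainf by blast
qed

lemma avgQ_pos_fin:
  fixes Q :: "(real^'n) set"
  assumes Q: "is_cube Q" and w: "weight Q w"
  shows "0 < avg Q w \<and> avg Q w < \<infinity>"
proof -
  let ?M = "lebesgue_on Q"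
  have QS[measurable]: "Q \<in> sets lebesgue" using cube_sets[OF Q] .
  have spM: "space ?M = Q" by (simp add: space_restrict_space)
  define E where "E = emeasure lebesgue Q"
  have E: "E \<noteq> 0" "E < top" using cube_meas_pos[OF Q] by (auto simp: E_def less_top)
  have wi: "integrable ?M w" and wpos: "AE x in ?M. 0 < w x" using w by (auto simp: weight_def)
  have wm[measurable]: "w \<in> borel_measurable ?M" using wi by auto
  define X where "X = (\<integral>\<^sup>+x. ennreal \<bar>w x\<bar> \<partial>?M)"
  have avgX: "avg Q w = X / E" by (simp add: avg_def X_def E_def nn_integral_restrict_space)
  have Xfin: "X < \<infinity>" using wi by (simp add: integrable_iff_bounded X_def)
  have Xpos: "X \<noteq> 0"
  proof
    assume "X = 0"
    then have "AE x in ?M. ennreal \<bar>w x\<bar> = 0" unfolding X_def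
      by (subst (asm) nn_integral_0_iff_AE) auto
    then have "AE x in ?M. False" using wpos by eventually_elim auto
    then have "emeasure ?M (space ?M) = 0"
      by (subst (asm) AE_iff_measurable[of "space ?M"]) auto
    then show False using E by (simp add: spM emeasure_restrict_space E_def)
  qed
  have "0 < X / E" using Xpos E by (simp add: ennreal_zero_less_divide zero_less_iff_neq_zero)
  moreover have "X / E < \<infinity>" using Xfin E by (simp add: divide_less_ennreal ennreal_top_mult)
  ultimately show ?thesis by (simp add: avgX)
qed

lemma Lpw_Lp:
  fixes Q :: "(real^'n) set"
  assumes Q: "is_cube Q" and p0: "0 < p0" and wA: "Ainf Q w" and f: "f \<in> Lpw p0 w Q"
  shows "\<exists>s>0. f \<in> Lp s Q"
proof -
  let ?M = "lebesgue_on Q"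
  have QS[measurable]: "Q \<in> sets lebesgue" using cube_sets[OF Q] .
  have spM: "space ?M = Q" by (simp add: space_restrict_space)
  have fm[measurable]: "f \<in> borel_measurable ?M"
    and fwi: "(\<integral>\<^sup>+x. ennreal (\<bar>f x\<bar> powr p0 * w x) \<partial>?M) < \<infinity>"
    using f by (auto simp: Lpw_def nn_integral_restrict_space)
  have weight: "weight Q w" using wA by (auto simp: Ainf_def A1_def Aq_def)
  have wi: "integrable ?M w" and wpos: "AE x in ?M. 0 < w x" using weight by (auto simp: weight_def)
  have wm[measurable]: "w \<in> borel_measurable ?M" using wi by auto
  have avg: "0 < avg Q w" "avg Q w < \<infinity>" using avgQ_pos_fin[OF Q weight] by auto
  have cubeQ: "is_cube Q" by (rule Q)
  show ?thesis
  proof (cases "A1 Q w")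
    case True
    then obtain C where AEC: "AE x in ?M. maxQ Q w x \<le> ennreal (C * w x)"
      by (auto simp: A1_def)
    define a where "a = enn2real (avg Q w)"
    have a: "avg Q w = ennreal a" "0 < a"
      using avg by (auto simp: a_def ennreal_enn2real_if less_top enn2real_positive_iff)
    have avgle: "avg Q w \<le> maxQ Q w x" if "x \<in> Q" for x
      unfolding maxQ_def by (rule SUP_upper) (use cubeQ that in auto)
    have pw: "AE x in ?M. ennreal (\<bar>f x\<bar> powr p0 * 1) \<le> ennreal (\<bar>C\<bar> / a) * ennreal (\<bar>f x\<bar> powr p0 * w x)"
      using AE_conjI[OF AEC wpos] AE_space
    proof eventually_elim
      case (elim x)
      then have x: "x \<in> Q" and wx: "0 < w x" and mx: "maxQ Q w x \<le> ennreal (C * w x)" by (auto simp: spM)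
      have "ennreal a \<le> ennreal (C * w x)" using avgle[OF x] mx a by simp
      then have aC: "a \<le> C * w x" using a(2) by (rule ennreal_le_pos[rotated])
      also have "\<dots> \<le> \<bar>C\<bar> * w x" using wx by (intro mult_right_mono) auto
      finally have aC': "1 \<le> \<bar>C\<bar> * w x / a" using a(2) by simp
      define y where "y = \<bar>f x\<bar> powr p0"
      have y0: "0 \<le> y" by (simp add: y_def)
      have "y * 1 \<le> y * (\<bar>C\<bar> * w x / a)" using aC' y0 by (rule mult_left_mono)
      also have "\<dots> = \<bar>C\<bar> / a * (y * w x)" by (simp add: field_simps)
      finally have "ennreal (y * 1) \<le> ennreal (\<bar>C\<bar> / a * (y * w x))" by (rule ennreal_leI)
      also have "\<dots> = ennreal (\<bar>C\<bar> / a) * ennreal (y * w x)"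
        using a(2) y0 wx by (intro ennreal_mult) auto
      finally show ?case by (simp add: y_def)
    qed
    have "(\<integral>\<^sup>+x. ennreal (\<bar>f x\<bar> powr p0 * 1) \<partial>?M) \<le> (\<integral>\<^sup>+x. ennreal (\<bar>C\<bar> / a) * ennreal (\<bar>f x\<bar> powr p0 * w x) \<partial>?M)"
      using pw by (rule nn_integral_mono_AE)
    also have "\<dots> = ennreal (\<bar>C\<bar> / a) * (\<integral>\<^sup>+x. ennreal (\<bar>f x\<bar> powr p0 * w x) \<partial>?M)"
      by (rule nn_integral_cmult) measurable
    also have "\<dots> < \<infinity>" using fwi by (simp add: ennreal_mult_less_top less_top)
    finally have "f \<in> Lp p0 Q" using fm by (simp add: Lp_def Lpw_def nn_integral_restrict_space)
    then show ?thesis using p0 by blast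
  next
    case False
    then obtain q where q: "q > 1" "Aq Q q w" using wA by (auto simp: Ainf_def)
    define \<sigma> where "\<sigma> x = w x powr (1 - q / (q - 1))" for x
    have \<sigma>m[measurable]: "\<sigma> \<in> borel_measurable ?M" unfolding \<sigma>_def by measurable
    have sup: "(SUP Q'\<in>{Q'. is_cube Q' \<and> Q' \<subseteq> Q}. avg Q' w * avg Q' \<sigma>) < \<infinity>"
    proof -
      have \<sigma>eq: "\<sigma> = (\<lambda>x. w x powr (1 - q / (q - 1)))" by (simp add: \<sigma>_def fun_eq_iff)
      show ?thesis using q(2) unfolding \<sigma>eq by (simp add: Aq_def Let_def)
    qed
    have "avg Q w * avg Q \<sigma> \<le> (SUP Q'\<in>{Q'. is_cube Q' \<and> Q' \<subseteq> Q}. avg Q' w * avg Q' \<sigma>)"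
      by (rule SUP_upper) (use cubeQ in auto)
    then have "avg Q w * avg Q \<sigma> < \<infinity>" using sup by (rule le_less_trans)
    then have avs: "avg Q \<sigma> < \<infinity>" using avg by (auto simp: ennreal_mult_less_top)
    define E where "E = emeasure lebesgue Q"
    have E: "E \<noteq> 0" "E \<noteq> top" using cube_meas_pos[OF Q] by (auto simp: E_def)
    have \<sigma>i': "(\<integral>\<^sup>+x. ennreal \<bar>\<sigma> x\<bar> \<partial>?M) \<noteq> top"
    proof
      assume "(\<integral>\<^sup>+x. ennreal \<bar>\<sigma> x\<bar> \<partial>?M) = top"
      then have "avg Q \<sigma> = top" using E
        by (simp add: avg_def nn_integral_restrict_space E_def ennreal_top_divide)
      then show False using avs by simp
    qed
    then have \<sigma>i: "(\<integral>\<^sup>+x. ennreal \<bar>\<sigma> x\<bar> \<partial>?M) < \<infinity>" by (simp add: less_top)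
    define s where "s = p0 / q"
    have s: "0 < s" using p0 q by (simp add: s_def)
    have pw: "AE x in ?M. ennreal (\<bar>f x\<bar> powr s * 1) \<le> ennreal (\<bar>f x\<bar> powr p0 * w x) + ennreal \<bar>\<sigma> x\<bar>"
      using wpos
    proof eventually_elim
      case (elim x)
      have "\<bar>f x\<bar> powr s \<le> \<bar>f x\<bar> powr p0 * w x + \<sigma> x"
        unfolding s_def \<sigma>_def by (rule young_pw[OF q(1) elim]) simp
      then have "ennreal (\<bar>f x\<bar> powr s * 1) \<le> ennreal (\<bar>f x\<bar> powr p0 * w x + \<bar>\<sigma> x\<bar>)"
        by (intro ennreal_leI) (simp add: \<sigma>_def)
      also have "\<dots> = ennreal (\<bar>f x\<bar> powr p0 * w x) + ennreal \<bar>\<sigma> x\<bar>"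
        using elim by (intro ennreal_plus) auto
      finally show ?case .
    qed
    have "(\<integral>\<^sup>+x. ennreal (\<bar>f x\<bar> powr s * 1) \<partial>?M) \<le> (\<integral>\<^sup>+x. ennreal (\<bar>f x\<bar> powr p0 * w x) + ennreal \<bar>\<sigma> x\<bar> \<partial>?M)"
      using pw by (rule nn_integral_mono_AE)
    also have "\<dots> = (\<integral>\<^sup>+x. ennreal (\<bar>f x\<bar> powr p0 * w x) \<partial>?M) + (\<integral>\<^sup>+x. ennreal \<bar>\<sigma> x\<bar> \<partial>?M)"
      by (rule nn_integral_add) measurable
    also have "\<dots> < \<infinity>" using fwi \<sigma>i by simp
    finally have "f \<in> Lp s Q" using fm by (simp add: Lp_def Lpw_def nn_integral_restrict_space)
    then show ?thesis using s by blast
  qed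
qed

theorem mainTheorem3:
  fixes Q :: "(real^'n) set" and p0 :: real
  assumes "is_cube Q" and "0 < p0"
  shows "(\<Union>r\<in>{0<..}. MA1 r Q) = (\<Union>p\<in>{0<..}. Lp p Q)
       \<and> (\<Union>p\<in>{0<..}. Lp p Q) = (\<Union>w\<in>{w. Ainf Q w}. Lpw p0 w Q)"
proof
  show "(\<Union>r\<in>{0<..}. MA1 r Q) = (\<Union>p\<in>{0<..}. Lp p Q)"
  proof (intro equalityI subsetI)
    fix f assume "f \<in> (\<Union>r\<in>{0<..}. MA1 r Q)"
    then obtain r where r: "0 < r" "f \<in> MA1 r Q" by auto
    then show "f \<in> (\<Union>p\<in>{0<..}. Lp p Q)" using MA1_Lp[OF assms(1) r] r by blast
  next
    fix f assume "f \<in> (\<Union>p\<in>{0<..}. Lp p Q)"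
    then obtain p where p: "0 < p" "f \<in> Lp p Q" by auto
    obtain v where v: "A1 Q v" "AE x in lebesgue_on Q. \<bar>f x\<bar> powr (p/2) \<le> v x \<and> 1 \<le> v x"
      using Lp_A1[OF assms(1) p] by blast
    have "f \<in> borel_measurable (lebesgue_on Q)" using p by (simp add: Lp_def Lpw_def)
    moreover have "AE x in lebesgue_on Q. \<bar>f x\<bar> powr (p/2) \<le> v x"
      using v(2) by eventually_elim auto
    ultimately have "f \<in> MA1 (p/2) Q" using v(1) by (auto simp: MA1_def)
    then show "f \<in> (\<Union>r\<in>{0<..}. MA1 r Q)" using p by (intro UN_I[of "p/2"]) auto
  qed
  show "(\<Union>p\<in>{0<..}. Lp p Q) = (\<Union>w\<in>{w. Ainf Q w}. Lpw p0 w Q)"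
  proof (intro equalityI subsetI)
    fix f assume "f \<in> (\<Union>p\<in>{0<..}. Lp p Q)"
    then obtain p where p: "0 < p" "f \<in> Lp p Q" by auto
    then show "f \<in> (\<Union>w\<in>{w. Ainf Q w}. Lpw p0 w Q)"
      using Lp_Ainf[OF assms(1) p(1) assms(2) p(2)] by blast
  next
    fix f assume "f \<in> (\<Union>w\<in>{w. Ainf Q w}. Lpw p0 w Q)"
    then obtain w where "Ainf Q w" "f \<in> Lpw p0 w Q" by auto
    then show "f \<in> (\<Union>p\<in>{0<..}. Lp p Q)"
      using Lpw_Lp[OF assms(1) assms(2)] by blast
  qed
qed

end
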